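(* Let $M$ be a rooted planar map with $n$ edges and $\operatorname{outv}(M) = k$. Then there are exactly $k+1$ one-corner components $U_0, U_1, \ldots, U_k$ with $\Pi(U_i) = M$; each has $n+1$ edges, and $\operatorname{outv}_{\mathcal{U}}(U_i) = i$ for each $0 \leq i \leq k$.
   Context: A rooted planar map is a planar map with a marked corner on the outer face (the root corner), whose vertex is the root vertex; the empty map is a single vertex. The root edge is the edge next to the root corner in clockwise order. $\operatorname{outv}(M)$ is the number of vertices of $M$ incident to the outer face. A one-corner component is a rooted planar map whose root corner is the only corner of the root vertex lying on the outer face (the empty map is one). For a one-corner component $U$, $\operatorname{outv}_{\mathcal{U}}(U)$ is the number of vertices of $U$ incident to the outer face other than the root vertex. For a non-empty one-corner component $U$ with root vertex $v$ and root edge $e$ (possibly a loop), $\Pi(U)$ is the rooted planar map obtained by deleting $e$ and re-rooting at the corner from which the other end of $e$ stems. *)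

theory Defs
  imports Main
begin

text \<open>
Rooted planar maps, encoded combinatorially (rotation systems).
A map is given by a finite set of darts (half-edges) D, a fixed-point-free
involution alpha on D (the two halves of an edge), and a permutation sigma of D
(sigma d = next dart counterclockwise around the vertex of d).
Vertices = sigma-orbits, edges = alpha-orbits.  A corner is identified with the dart d
at which it starts: corner d is the angular sector from d counterclockwise to sigma d.
The corner following corner d along its face is alpha (sigma d), so faces are the
orbits of alpha o sigma (as sets of corners).  The root is a dart r: the root corner is
corner r, the root vertex is the vertex of r, and the root edge (next to the root corner
in clockwise order) is the edge of r.  The outer face is the face containing the root
corner.  The empty map (single vertex, no edges) is the map with no darts.
Rooted maps are considered up to root-preserving orientation-preserving isomorphism.
\<close>

record dmap =
  darts :: "nat set"
  alpha :: "nat \<Rightarrow> nat"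
  sigma :: "nat \<Rightarrow> nat"
  root  :: nat

definition orb :: "(nat \<Rightarrow> nat) \<Rightarrow> nat \<Rightarrow> nat set" where
  "orb f x = {(f ^^ j) x | j. True}"

definition phi :: "dmap \<Rightarrow> nat \<Rightarrow> nat" where
  "phi M = alpha M \<circ> sigma M"

definition nedges :: "dmap \<Rightarrow> nat" where
  "nedges M = card (darts M) div 2"

definition nvertices :: "dmap \<Rightarrow> nat" where
  "nvertices M = (if darts M = {} then 1 else card (orb (sigma M) ` darts M))"

definition nfaces :: "dmap \<Rightarrow> nat" where
  "nfaces M = (if darts M = {} then 1 else card (orb (phi M) ` darts M))"

definition connected_map :: "dmap \<Rightarrow> bool" where
  "connected_map M \<longleftrightarrow>
     (\<forall>x\<in>darts M. \<forall>y\<in>darts M.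
        (x, y) \<in> ({(d, alpha M d) | d. d \<in> darts M} \<union> {(d, sigma M d) | d. d \<in> darts M})\<^sup>*)"

definition rooted_planar_map :: "dmap \<Rightarrow> bool" where
  "rooted_planar_map M \<longleftrightarrow>
     finite (darts M) \<and>
     (\<forall>x\<in>darts M. alpha M x \<in> darts M \<and> alpha M x \<noteq> x \<and> alpha M (alpha M x) = x) \<and>
     bij_betw (sigma M) (darts M) (darts M) \<and>
     connected_map M \<and>
     nvertices M + nfaces M = nedges M + 2 \<and>
     (darts M \<noteq> {} \<longrightarrow> root M \<in> darts M)"

definition map_iso :: "dmap \<Rightarrow> dmap \<Rightarrow> bool" where
  "map_iso M N \<longleftrightarrow>
     (\<exists>f. bij_betw f (darts M) (darts N) \<and>
          (\<forall>x\<in>darts M. f (alpha M x) = alpha N (f x) \<and> f (sigma M x) = sigma N (f x)) \<and>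
          (darts M \<noteq> {} \<longrightarrow> f (root M) = root N))"

definition outer_face :: "dmap \<Rightarrow> nat set" where
  "outer_face M = orb (phi M) (root M)"

definition outv :: "dmap \<Rightarrow> nat" where
  "outv M = (if darts M = {} then 1
             else card (orb (sigma M) ` outer_face M))"

definition one_corner :: "dmap \<Rightarrow> bool" where
  "one_corner U \<longleftrightarrow> rooted_planar_map U \<and>
     (darts U = {} \<or> orb (sigma U) (root U) \<inter> outer_face U = {root U})"

definition outvU :: "dmap \<Rightarrow> nat" where
  "outvU U = outv U - 1"

text \<open>The operation Pi: delete the root edge {r, alpha r}, and re-root at the corner
(of the new map) in which the other end alpha r of the root edge stemmed.  The rotation
around each vertex skips the deleted darts.\<close>
definition skip_next :: "dmap \<Rightarrow> nat \<Rightarrow> nat" where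
  "skip_next U x =
     (let del = {root U, alpha U (root U)}
      in (sigma U ^^ (LEAST j. 0 < j \<and> (sigma U ^^ j) x \<notin> del)) x)"

definition Pi :: "dmap \<Rightarrow> dmap" where
  "Pi U =
     (let D' = darts U - {root U, alpha U (root U)}
      in \<lparr> darts = D', alpha = alpha U, sigma = skip_next U,
           root = (if D' = {} then 0
                   else (THE d. d \<in> D' \<and> skip_next U d = skip_next U (alpha U (root U)))) \<rparr>)"

end

theory Submission
  imports Defs
begin


lemma orb_iff: "y \<in> orb f x \<longleftrightarrow> (\<exists>j. y = (f^^j) x)"
  by (auto simp: orb_def)

lemma orb_funpow[simp]: "(f^^j) x \<in> orb f x"
  by (auto simp: orb_def)

lemma orb_self[simp]: "x \<in> orb f x"
  using orb_funpow[of 0 f x] by simp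

lemma orb_step: "y \<in> orb f x \<Longrightarrow> f y \<in> orb f x"
proof -
  assume "y \<in> orb f x"
  then obtain j where "y = (f^^j) x" by (auto simp: orb_def)
  then have "f y = (f^^(Suc j)) x" by simp
  then show ?thesis by (metis orb_funpow)
qed

lemma orb_f_self[simp]: "f x \<in> orb f x"
  by (rule orb_step) simp

lemma orb_trans: "y \<in> orb f x \<Longrightarrow> orb f y \<subseteq> orb f x"
proof
  fix z assume "y \<in> orb f x" "z \<in> orb f y"
  then obtain i j where "y = (f^^j) x" "z = (f^^i) y" by (auto simp: orb_def)
  then have "z = (f^^(i+j)) x" by (simp add: funpow_add)
  then show "z \<in> orb f x" by (metis orb_funpow)
qed

lemma orb_closed:
  assumes "x \<in> T" "\<And>y. y \<in> T \<Longrightarrow> y \<in> orb f x \<Longrightarrow> f y \<in> T"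
  shows "orb f x \<subseteq> T"
proof
  fix z assume "z \<in> orb f x"
  then obtain j where z: "z = (f^^j) x" by (auto simp: orb_def)
  have "(f^^j) x \<in> T" by (induction j) (use assms in auto)
  then show "z \<in> T" using z by simp
qed

lemma orb_fixed: "f x = x \<Longrightarrow> orb f x = {x}"
proof -
  assume a: "f x = x"
  have "(f^^j) x = x" for j by (induction j) (use a in auto)
  then show ?thesis by (auto simp: orb_def)
qed

lemma funpow_in: "bij_betw f S S \<Longrightarrow> x \<in> S \<Longrightarrow> (f^^j) x \<in> S"
  by (induction j) (auto simp: bij_betw_def)

lemma orb_subset: "bij_betw f S S \<Longrightarrow> x \<in> S \<Longrightarrow> orb f x \<subseteq> S"
  using funpow_in by (auto simp: orb_def)

lemma period_exists:
  assumes "finite S" "bij_betw f S S" "x \<in> S"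
  shows "\<exists>n>0. (f^^n) x = x"
proof -
  let ?g = "\<lambda>j. (f^^j) x"
  have "?g ` {0..card S} \<subseteq> S" using funpow_in[OF assms(2,3)] by auto
  then have "card (?g ` {0..card S}) \<le> card S" by (simp add: card_mono assms(1))
  then have "\<not> inj_on ?g {0..card S}"
    using card_image by fastforce
  then obtain i j where ij: "i \<le> card S" "j \<le> card S" "i \<noteq> j" "?g i = ?g j"
    by (auto simp: inj_on_def)
  {
    fix i j assume ij: "i < j" "?g i = ?g j"
    have "(f^^i) ((f^^(j-i)) x) = (f^^i) x"
      using ij by (simp add: funpow_add[symmetric, THEN fun_cong, simplified])
    moreover have "inj_on (f^^i) S" using bij_betw_funpow[OF assms(2)] bij_betw_def by blast
    moreover have "(f^^(j-i)) x \<in> S" using funpow_in[OF assms(2,3)] .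
    ultimately have "(f^^(j-i)) x = x" using assms(3) by (auto simp: inj_on_def)
    then have ?thesis using ij by (intro exI[of _ "j-i"]) auto
  }
  then show ?thesis using ij by (metis linorder_neqE_nat)
qed

definition per :: "(nat \<Rightarrow> nat) \<Rightarrow> nat \<Rightarrow> nat" where
  "per f x = (LEAST n. 0 < n \<and> (f^^n) x = x)"

lemma per_props:
  assumes "finite S" "bij_betw f S S" "x \<in> S"
  shows "0 < per f x" "(f^^(per f x)) x = x" "\<And>t. 0 < t \<Longrightarrow> t < per f x \<Longrightarrow> (f^^t) x \<noteq> x"
proof -
  obtain n where n: "0 < n" "(f^^n) x = x" using period_exists[OF assms] by blast
  show "0 < per f x" "(f^^(per f x)) x = x"
    unfolding per_def using LeastI[of "\<lambda>n. 0 < n \<and> (f^^n) x = x", OF conjI[OF n]] by auto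
  show "\<And>t. 0 < t \<Longrightarrow> t < per f x \<Longrightarrow> (f^^t) x \<noteq> x"
    unfolding per_def using not_less_Least by blast
qed

lemma funpow_mod_per:
  assumes "finite S" "bij_betw f S S" "x \<in> S"
  shows "(f^^j) x = (f^^(j mod per f x)) x"
  using funpow_mod_eq[where f=f and n="per f x" and x=x and m=j] per_props[OF assms] by simp

lemma orb_sym:
  assumes "finite S" "bij_betw f S S" "x \<in> S" "y \<in> orb f x"
  shows "x \<in> orb f y"
proof -
  obtain j where y: "y = (f^^j) x" using assms(4) by (auto simp: orb_def)
  let ?p = "per f x"
  have p: "0 < ?p" "(f^^?p) x = x" using per_props[OF assms(1-3)] by auto
  have e: "?p * (j+1) - j + j = ?p * (j+1)"
  proof -
    have "j \<le> ?p * (j+1)" using p(1) by (cases "?p") auto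
    then show ?thesis by simp
  qed
  have "(f^^(?p * (j+1) - j)) y = (f^^(?p * (j+1) - j + j)) x"
    using y by (simp add: funpow_add)
  also have "\<dots> = (f^^(?p * (j+1))) x" using e by simp
  also have "\<dots> = x"
    using funpow_mod_per[OF assms(1-3), of "?p * (j+1)"] by simp
  finally show ?thesis by (metis orb_funpow)
qed

lemma orb_eq:
  assumes "finite S" "bij_betw f S S" "x \<in> S" "y \<in> orb f x"
  shows "orb f y = orb f x"
  using orb_trans[OF assms(4)] orb_trans[OF orb_sym[OF assms]] by blast

lemma orb_meet:
  assumes "finite S" "bij_betw f S S" "x \<in> S" "y \<in> S" "z \<in> orb f x" "z \<in> orb f y"
  shows "orb f x = orb f y"
  using orb_eq[OF assms(1-3,5)] orb_eq[OF assms(1,2,4,6)] by simp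

lemma orb_per:
  assumes "finite S" "bij_betw f S S" "x \<in> S" "y \<in> orb f x"
  shows "\<exists>t. 0 < t \<and> t \<le> per f x \<and> y = (f^^t) x"
proof -
  obtain j where y: "y = (f^^j) x" using assms(4) by (auto simp: orb_def)
  have p: "0 < per f x" "(f^^(per f x)) x = x" using per_props[OF assms(1-3)] by auto
  show ?thesis
  proof (cases "j mod per f x = 0")
    case True
    then show ?thesis using y p funpow_mod_per[OF assms(1-3), of j] by (intro exI[of _ "per f x"]) auto
  next
    case False
    then show ?thesis using y p funpow_mod_per[OF assms(1-3), of j]
      by (intro exI[of _ "j mod per f x"]) (auto intro: less_imp_le)
  qed
qed


lemma ins_bij:
  assumes "finite S" "bij_betw f S S" "p \<in> S" "n \<notin> S"
    "g p = n" "g n = f p" "\<forall>z\<in>S-{p}. g z = f z"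
  shows "bij_betw g (insert n S) (insert n S)"
proof -
  have img: "g ` insert n S = insert n S"
  proof
    show "g ` insert n S \<subseteq> insert n S"
    proof
      fix y assume "y \<in> g ` insert n S"
      then obtain z where z: "z \<in> insert n S" "y = g z" by auto
      show "y \<in> insert n S"
      proof (cases "z = n")
        case True then show ?thesis using z assms(3,6) bij_betw_apply[OF assms(2)] by auto
      next
        case False
        then have "z \<in> S" using z by auto
        then show ?thesis using z assms(5,7) bij_betw_apply[OF assms(2)] by (cases "z = p") auto
      qed
    qed
    show "insert n S \<subseteq> g ` insert n S"
    proof
      fix y assume y: "y \<in> insert n S"
      show "y \<in> g ` insert n S"
      proof (cases "y = n")
        case True then show ?thesis using assms(3,5) by (metis imageI insertI2)
      next
        case False
        then have "y \<in> S" using y by auto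
        then obtain z where z: "z \<in> S" "y = f z" using assms(2) by (metis bij_betw_imp_surj_on imageE)
        show ?thesis
        proof (cases "z = p")
          case True then show ?thesis using z assms(6) by (metis imageI insertI1)
        next
          case False then show ?thesis using z assms(7) by (metis DiffI imageI insertI2 singletonD)
        qed
      qed
    qed
  qed
  then have "inj_on g (insert n S)" using finite_surj_inj[of "insert n S" g] assms(1) by auto
  then show ?thesis using img by (simp add: bij_betw_def)
qed

lemma ins_orb:
  assumes fin: "finite S" and bf: "bij_betw f S S" and pS: "p \<in> S" and nS: "n \<notin> S"
    and g1: "g p = n" and g2: "g n = f p" and g3: "\<forall>z\<in>S-{p}. g z = f z"
  shows "orb g p = insert n (orb f p)" "orb g n = insert n (orb f p)"
    "\<And>z. z \<in> S \<Longrightarrow> orb g z \<inter> S = orb f z"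
proof -
  have bg: "bij_betw g (insert n S) (insert n S)" using ins_bij[OF assms] .
  have fin': "finite (insert n S)" using fin by simp
  have sub: "orb f y \<subseteq> S" if "y \<in> S" for y using orb_subset[OF bf that] .
  show A: "orb g p = insert n (orb f p)"
  proof
    show "orb g p \<subseteq> insert n (orb f p)"
    proof (rule orb_closed)
      fix y assume y: "y \<in> insert n (orb f p)"
      show "g y \<in> insert n (orb f p)"
      proof (cases "y = n")
        case True then show ?thesis using g2 by simp
      next
        case False
        then have yo: "y \<in> orb f p" using y by auto
        show ?thesis
        proof (cases "y = p")
          case True then show ?thesis using g1 by simp
        next
          case False
          have "y \<in> S" using yo sub[OF pS] by auto
          then have "g y = f y" using g3 False by auto
          then show ?thesis using orb_step[OF yo] by simp
        qed
      qed
    qed simp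
    have "orb f p \<subseteq> orb g p"
    proof (rule orb_closed)
      fix y assume y: "y \<in> orb g p" "y \<in> orb f p"
      show "f y \<in> orb g p"
      proof (cases "y = p")
        case True
        have "g (g p) \<in> orb g p" by (intro orb_step) simp
        then show ?thesis using True g1 g2 by simp
      next
        case False
        have "y \<in> S" using y(2) sub[OF pS] by auto
        then have "g y = f y" using g3 False by auto
        then show ?thesis using orb_step[OF y(1)] by simp
      qed
    qed simp
    moreover have "n \<in> orb g p" using g1 orb_f_self[of g p] by simp
    ultimately show "insert n (orb f p) \<subseteq> orb g p" by auto
  qed
  show "orb g n = insert n (orb f p)"
    using orb_eq[OF fin' bg, of p n] A pS by auto
  fix z assume zS: "z \<in> S"
  show "orb g z \<inter> S = orb f z"
  proof (cases "p \<in> orb f z")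
    case True
    have "z \<in> orb f p" using orb_sym[OF fin bf zS True] .
    then have "z \<in> orb g p" using A by auto
    then have "orb g z = orb g p" using orb_eq[OF fin' bg, of p z] pS by auto
    moreover have "orb f z = orb f p" using orb_eq[OF fin bf pS \<open>z \<in> orb f p\<close>] .
    ultimately show ?thesis using A nS sub[OF pS] by auto
  next
    case False
    have "orb g z \<subseteq> orb f z"
    proof (rule orb_closed)
      fix y assume y: "y \<in> orb f z"
      then have "y \<noteq> p" "y \<in> S" using False sub[OF zS] by auto
      then show "g y \<in> orb f z" using g3 orb_step[OF y] by auto
    qed simp
    moreover have "orb f z \<subseteq> orb g z"
    proof (rule orb_closed)
      fix y assume y: "y \<in> orb g z" "y \<in> orb f z"
      then have "y \<noteq> p" "y \<in> S" using False sub[OF zS] by auto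
      then show "f y \<in> orb g z" using g3 orb_step[OF y(1)] by auto
    qed simp
    ultimately show ?thesis using sub[OF zS] by auto
  qed
qed

lemma fix_bij:
  assumes "bij_betw f S S" "n \<notin> S" "g n = n" "\<forall>z\<in>S. g z = f z"
  shows "bij_betw g (insert n S) (insert n S)"
proof -
  have "bij_betw g S S" using assms(1) bij_betw_cong[of S g f S] assms(4) by simp
  then have i: "inj_on g S" and im: "g ` S = S" by (auto simp: bij_betw_def)
  have "inj_on g (insert n S)" using i im assms(2,3) by (simp add: inj_on_insert)
  moreover have "g ` insert n S = insert n S" using im assms(3) by simp
  ultimately show ?thesis by (simp add: bij_betw_def)
qed

lemma fix_orb:
  assumes bf: "bij_betw f S S" and nS: "n \<notin> S" and g1: "g n = n" and g2: "\<forall>z\<in>S. g z = f z"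
  shows "orb g n = {n}" "\<And>z. z \<in> S \<Longrightarrow> orb g z = orb f z"
proof -
  show "orb g n = {n}" using orb_fixed g1 by metis
  fix z assume zS: "z \<in> S"
  have "(g^^j) z = (f^^j) z" for j
    by (induction j) (use funpow_in[OF bf zS] g2 in auto)
  then show "orb g z = orb f z" by (simp add: orb_def)
qed

lemma orb_restrict_card:
  assumes fin: "finite S'" and bg: "bij_betw g S' S'" and sub: "S \<subseteq> S'"
    and h: "\<forall>z\<in>S. orb g z \<inter> S = orb f z" and T: "T \<subseteq> S"
  shows "card (orb g ` T) = card (orb f ` T)"
proof -
  have e: "orb f ` T = (\<lambda>Q. Q \<inter> S) ` (orb g ` T)"
    using h T by (auto simp: image_image intro!: image_cong)
  have "inj_on (\<lambda>Q. Q \<inter> S) (orb g ` T)"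
  proof (rule inj_onI)
    fix X1 X2 assume "X1 \<in> orb g ` T" "X2 \<in> orb g ` T" "X1 \<inter> S = X2 \<inter> S"
    then obtain z1 z2 where z: "z1 \<in> T" "z2 \<in> T" "X1 = orb g z1" "X2 = orb g z2"
      "orb g z1 \<inter> S = orb g z2 \<inter> S" by auto
    then have "z1 \<in> orb g z2" using T orb_self[of z1 g] by blast
    then show "X1 = X2" using orb_eq[OF fin bg, of z2 z1] z T sub by auto
  qed
  then show ?thesis using e card_image by metis
qed

lemma funpow_inj_per:
  assumes "finite S" "bij_betw f S S" "x \<in> S" "i < j" "j - i < per f x"
  shows "(f^^i) x \<noteq> (f^^j) x"
proof
  assume eq: "(f^^i) x = (f^^j) x"
  have "(f^^i) ((f^^(j-i)) x) = (f^^i) x"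
    using eq assms(4) by (simp add: funpow_add[symmetric, THEN fun_cong, simplified])
  moreover have "inj_on (f^^i) S" using bij_betw_funpow[OF assms(2)] bij_betw_def by blast
  moreover have "(f^^(j-i)) x \<in> S" using funpow_in[OF assms(2,3)] .
  ultimately have "(f^^(j-i)) x = x" using assms(3) by (auto simp: inj_on_def)
  then show False using per_props(3)[OF assms(1-3), of "j-i"] assms(4,5) by auto
qed


lemma funpow_Suc_app: "(f^^Suc t) x = f ((f^^t) x)" by simp

lemma split_orb:
  assumes fin: "finite S" and bf: "bij_betw f S S" and rS: "r \<in> S"
    and aS: "a \<notin> S" and bS: "b \<notin> S" and ab: "a \<noteq> b"
    and s: "0 < s" "s < per f r" and x: "x = (f^^s) r"
    and g1: "g r = b" and g2: "g b = f x" and g3: "g x = a" and g4: "g a = f r"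
    and g5: "\<forall>z\<in>S-{r,x}. g z = f z"
  shows "orb g b = insert b {(f^^t) r | t. s < t \<and> t \<le> per f r}"
    "orb g a = insert a {(f^^t) r | t. 0 < t \<and> t \<le> s}"
    "\<And>z. z \<in> S \<Longrightarrow> z \<notin> orb f r \<Longrightarrow> orb g z = orb f z"
proof -
  define m where "m = per f r"
  have m: "0 < m" "(f^^m) r = r" "\<And>t. 0 < t \<Longrightarrow> t < m \<Longrightarrow> (f^^t) r \<noteq> r"
    using per_props[OF fin bf rS] unfolding m_def by auto
  have WS: "(f^^t) r \<in> S" for t using funpow_in[OF bf rS] .
  have Wx: "(f^^t) r \<noteq> x" if "0 < t" "t \<le> m" "t \<noteq> s" for t
  proof (cases "t < s")
    case True
    then show ?thesis using funpow_inj_per[OF fin bf rS, of t s] x s that unfolding m_def by auto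
  next
    case False
    then have st: "s < t" using that by auto
    have d: "t - s < per f r" using st s(1) that(2) unfolding m_def by linarith
    then show ?thesis using funpow_inj_per[OF fin bf rS, of s t] x st by auto
  qed
  have step: "g ((f^^t) r) = (f^^Suc t) r" if "0 < t" "t < m" "t \<noteq> s" for t
    using g5 WS[of t] m(3)[OF that(1,2)] Wx[OF that(1) _ that(3)] that(2) by auto
  show B: "orb g b = insert b {(f^^t) r | t. s < t \<and> t \<le> per f r}"
  proof
    show "orb g b \<subseteq> insert b {(f^^t) r | t. s < t \<and> t \<le> per f r}"
    proof (rule orb_closed)
      fix y assume "y \<in> insert b {(f^^t) r | t. s < t \<and> t \<le> per f r}"
      then consider "y = b" | t where "y = (f^^t) r" "s < t" "t \<le> m" unfolding m_def by auto
      then show "g y \<in> insert b {(f^^t) r | t. s < t \<and> t \<le> per f r}"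
      proof cases
        case 1
        then have "g y = (f^^Suc s) r" using g2 x by simp
        then show ?thesis using s by (auto simp: m_def intro!: exI[of _ "Suc s"])
      next
        case (2 t)
        show ?thesis
        proof (cases "t = m")
          case True then show ?thesis using 2 m(2) g1 by simp
        next
          case False
          then have "g y = (f^^Suc t) r" using 2 step[of t] s by auto
          then show ?thesis using 2 False by (auto simp: m_def intro!: exI[of _ "Suc t"])
        qed
      qed
    qed simp
    have "(f^^(Suc s + d)) r \<in> orb g b" if "Suc s + d \<le> m" for d
      using that
    proof (induction d)
      case 0
      then show ?case using g2 x orb_f_self[of g b] by simp
    next
      case (Suc d)
      then have "(f^^(Suc s + d)) r \<in> orb g b" by simp
      then have "g ((f^^(Suc s + d)) r) \<in> orb g b" by (rule orb_step)
      moreover have "g ((f^^(Suc s + d)) r) = (f^^Suc (Suc s + d)) r"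
        using step[of "Suc s + d"] Suc.prems by auto
      ultimately show ?case by simp
    qed
    then have "(f^^t) r \<in> orb g b" if "s < t" "t \<le> m" for t
      using that by (metis Suc_leI le_add_diff_inverse)
    then show "insert b {(f^^t) r | t. s < t \<and> t \<le> per f r} \<subseteq> orb g b"
      unfolding m_def[symmetric] by auto
  qed
  show "orb g a = insert a {(f^^t) r | t. 0 < t \<and> t \<le> s}"
  proof
    show "orb g a \<subseteq> insert a {(f^^t) r | t. 0 < t \<and> t \<le> s}"
    proof (rule orb_closed)
      fix y assume "y \<in> insert a {(f^^t) r | t. 0 < t \<and> t \<le> s}"
      then consider "y = a" | t where "y = (f^^t) r" "0 < t" "t \<le> s" by auto
      then show "g y \<in> insert a {(f^^t) r | t. 0 < t \<and> t \<le> s}"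
      proof cases
        case 1
        then have "g y = (f^^Suc 0) r" using g4 by simp
        then show ?thesis using s by (auto intro!: exI[of _ "Suc 0"])
      next
        case (2 t)
        show ?thesis
        proof (cases "t = s")
          case True then show ?thesis using 2 x g3 by simp
        next
          case False
          then have "g y = (f^^Suc t) r" using 2 step[of t] s unfolding m_def by auto
          then show ?thesis using 2 False by (auto intro!: exI[of _ "Suc t"])
        qed
      qed
    qed simp
    have "(f^^(Suc d)) r \<in> orb g a" if "Suc d \<le> s" for d
      using that
    proof (induction d)
      case 0
      then show ?case using g4 orb_f_self[of g a] by simp
    next
      case (Suc d)
      then have "(f^^(Suc d)) r \<in> orb g a" by simp
      then have "g ((f^^(Suc d)) r) \<in> orb g a" by (rule orb_step)
      moreover have "g ((f^^(Suc d)) r) = (f^^Suc (Suc d)) r"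
        using step[of "Suc d"] Suc.prems s unfolding m_def by auto
      ultimately show ?case by simp
    qed
    then have "(f^^t) r \<in> orb g a" if "0 < t" "t \<le> s" for t
      using that by (metis Suc_pred Suc_le_eq)
    then show "insert a {(f^^t) r | t. 0 < t \<and> t \<le> s} \<subseteq> orb g a" by auto
  qed
  fix z assume zS: "z \<in> S" and zn: "z \<notin> orb f r"
  have avoid: "y \<noteq> r \<and> y \<noteq> x" if "y \<in> orb f z" for y
  proof
    show "y \<noteq> r"
    proof
      assume "y = r"
      then have "z \<in> orb f r" using orb_sym[OF fin bf zS] that by auto
      then show False using zn by simp
    qed
    show "y \<noteq> x"
    proof
      assume "y = x"
      then have "y \<in> orb f r" using x by simp
      then have "orb f z = orb f r" using orb_meet[OF fin bf zS rS, of y] that by simp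
      then show False using zn orb_self[of z f] by simp
    qed
  qed
  have sub: "orb f z \<subseteq> S" using orb_subset[OF bf zS] .
  have "orb g z \<subseteq> orb f z"
  proof (rule orb_closed)
    fix y assume y: "y \<in> orb f z"
    then have "g y = f y" using avoid[OF y] sub g5 by auto
    then show "g y \<in> orb f z" using orb_step[OF y] by simp
  qed simp
  moreover have "orb f z \<subseteq> orb g z"
  proof (rule orb_closed)
    fix y assume y: "y \<in> orb g z" "y \<in> orb f z"
    then have "g y = f y" using avoid[OF y(2)] sub g5 by auto
    then show "f y \<in> orb g z" using orb_step[OF y(1)] by simp
  qed simp
  ultimately show "orb g z = orb f z" by auto
qed

lemma split_card:
  assumes fin: "finite S" and bf: "bij_betw f S S" and rS: "r \<in> S"
    and aS: "a \<notin> S" and bS: "b \<notin> S" and ab: "a \<noteq> b"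
    and s: "0 < s" "s < per f r" and x: "x = (f^^s) r"
    and g1: "g r = b" and g2: "g b = f x" and g3: "g x = a" and g4: "g a = f r"
    and g5: "\<forall>z\<in>S-{r,x}. g z = f z"
    and bg: "bij_betw g (S \<union> {a,b}) (S \<union> {a,b})"
  shows "card (orb g ` (S \<union> {a,b})) = card (orb f ` S) + 1"
proof -
  note so = split_orb[OF fin bf rS aS bS ab s x g1 g2 g3 g4 g5]
  have fin': "finite (S \<union> {a,b})" using fin by simp
  have mem: "z \<in> orb g a \<or> z \<in> orb g b" if zr: "z \<in> orb f r" for z
  proof -
    obtain t where t: "0 < t" "t \<le> per f r" "z = (f^^t) r" using orb_per[OF fin bf rS zr] by blast
    show ?thesis
    proof (cases "t \<le> s")
      case True then show ?thesis using so(2) t by auto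
    next
      case False then show ?thesis using so(1) t by auto
    qed
  qed
  have eq: "orb g ` (S \<union> {a,b}) = (orb f ` S - {orb f r}) \<union> {orb g a, orb g b}"
  proof
    show "orb g ` (S \<union> {a,b}) \<subseteq> (orb f ` S - {orb f r}) \<union> {orb g a, orb g b}"
    proof
      fix Q assume "Q \<in> orb g ` (S \<union> {a,b})"
      then obtain z where z: "z \<in> S \<union> {a,b}" "Q = orb g z" by auto
      show "Q \<in> (orb f ` S - {orb f r}) \<union> {orb g a, orb g b}"
      proof (cases "z \<in> S")
        case True
        show ?thesis
        proof (cases "z \<in> orb f r")
          case True
          then have "z \<in> orb g a \<or> z \<in> orb g b" using mem by auto
          then have "orb g z = orb g a \<or> orb g z = orb g b"
            using orb_eq[OF fin' bg, of a z] orb_eq[OF fin' bg, of b z] by auto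
          then show ?thesis using z by auto
        next
          case False
          then have "orb g z = orb f z" using so(3) \<open>z \<in> S\<close> by auto
          moreover have "orb f z \<noteq> orb f r" using False orb_self[of z f] by auto
          ultimately show ?thesis using z \<open>z \<in> S\<close> by auto
        qed
      next
        case False then show ?thesis using z by auto
      qed
    qed
    show "(orb f ` S - {orb f r}) \<union> {orb g a, orb g b} \<subseteq> orb g ` (S \<union> {a,b})"
    proof
      fix Q assume Q: "Q \<in> (orb f ` S - {orb f r}) \<union> {orb g a, orb g b}"
      show "Q \<in> orb g ` (S \<union> {a,b})"
      proof (cases "Q \<in> {orb g a, orb g b}")
        case True then show ?thesis by auto
      next
        case False
        then obtain z where z: "z \<in> S" "Q = orb f z" "orb f z \<noteq> orb f r" using Q by auto
        have "z \<notin> orb f r" using z orb_eq[OF fin bf rS, of z] by auto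
        then have "Q = orb g z" using so(3) z by auto
        then show ?thesis using z by auto
      qed
    qed
  qed
  have sub: "orb f z \<subseteq> S" if "z \<in> S" for z using orb_subset[OF bf that] .
  have na: "orb g a \<notin> orb f ` S" using sub aS so(2) by auto
  have nb: "orb g b \<notin> orb f ` S" using sub bS so(1) by auto
  have "b \<notin> orb g a" using so(2) bS ab funpow_in[OF bf rS] by auto
  then have nab: "orb g a \<noteq> orb g b" using orb_self[of b g] by auto
  have fo: "finite (orb f ` S)" using fin by simp
  have "card ((orb f ` S - {orb f r}) \<union> {orb g a, orb g b}) = card (orb f ` S - {orb f r}) + 2"
    using na nb nab fo by (subst card_Un_disjoint) auto
  moreover have "card (orb f ` S - {orb f r}) + 1 = card (orb f ` S)"
    using rS fo by (metis Suc_eq_plus1 card_Suc_Diff1 imageI)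
  ultimately show ?thesis using eq by simp
qed

lemma ins_card:
  assumes fin: "finite S" and bf: "bij_betw f S S" and pS: "p \<in> S" and nS: "n \<notin> S"
    and g1: "g p = n" and g2: "g n = f p" and g3: "\<forall>z\<in>S-{p}. g z = f z"
  shows "card (orb g ` insert n S) = card (orb f ` S)"
proof -
  note io = ins_orb[OF assms]
  have bg: "bij_betw g (insert n S) (insert n S)" using ins_bij[OF assms] .
  have "orb g ` insert n S = orb g ` S" using io(1,2) pS by auto
  moreover have "card (orb g ` S) = card (orb f ` S)"
    using orb_restrict_card[OF _ bg, of S f S] fin io(3) by auto
  ultimately show ?thesis by simp
qed

lemma fix_card:
  assumes fin: "finite S" and bf: "bij_betw f S S" and nS: "n \<notin> S" and g1: "g n = n"
    and g2: "\<forall>z\<in>S. g z = f z"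
  shows "card (orb g ` insert n S) = card (orb f ` S) + 1"
proof -
  note fo = fix_orb[OF bf nS g1 g2]
  have "orb g ` insert n S = insert {n} (orb f ` S)" using fo by auto
  moreover have "{n} \<notin> orb f ` S" using nS orb_self by (metis imageE singletonD)
  ultimately show ?thesis using fin by simp
qed


definition ins :: "(nat \<Rightarrow> nat) \<Rightarrow> nat \<Rightarrow> nat \<Rightarrow> nat \<Rightarrow> nat" where
  "ins f p n = (\<lambda>z. if z = p then n else if z = n then f p else f z)"

definition fresh :: "nat set \<Rightarrow> nat" where
  "fresh D = Suc (Max (insert 0 D))"

lemma fresh_notin: "finite D \<Longrightarrow> fresh D \<notin> D" "finite D \<Longrightarrow> Suc (fresh D) \<notin> D"
proof -
  assume f: "finite D"
  have "x \<le> Max (insert 0 D)" if "x \<in> D" for x using f that by simp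
  then show "fresh D \<notin> D" "Suc (fresh D) \<notin> D" unfolding fresh_def by fastforce+
qed

definition mkU :: "dmap \<Rightarrow> nat option \<Rightarrow> dmap" where
  "mkU M y = \<lparr> darts = insert (Suc (fresh (darts M))) (insert (fresh (darts M)) (darts M)),
     alpha = (alpha M)(fresh (darts M) := Suc (fresh (darts M)), Suc (fresh (darts M)) := fresh (darts M)),
     sigma = (case y of None \<Rightarrow> (ins (sigma M) (root M) (fresh (darts M)))(Suc (fresh (darts M)) := Suc (fresh (darts M)))
                | Some x \<Rightarrow> ins (ins (sigma M) (root M) (fresh (darts M))) x (Suc (fresh (darts M)))),
     root = Suc (fresh (darts M)) \<rparr>"

definition Rel :: "dmap \<Rightarrow> (nat \<times> nat) set" where
  "Rel M = {(d, alpha M d) | d. d \<in> darts M} \<union> {(d, sigma M d) | d. d \<in> darts M}"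

lemma connected_map_Rel: "connected_map M \<longleftrightarrow> (\<forall>x\<in>darts M. \<forall>y\<in>darts M. (x, y) \<in> (Rel M)\<^sup>*)"
  unfolding connected_map_def Rel_def by simp

lemma Rel_closed:
  assumes "\<forall>x\<in>darts M. alpha M x \<in> darts M" "bij_betw (sigma M) (darts M) (darts M)"
    "(u, v) \<in> (Rel M)\<^sup>*" "u \<in> darts M"
  shows "v \<in> darts M"
  using assms(3,4)
proof (induction rule: rtrancl_induct)
  case (step y z)
  then show ?case using assms(1,2) bij_betw_apply unfolding Rel_def by fastforce
qed simp

lemma Rel_orb:
  assumes "bij_betw (sigma M) (darts M) (darts M)" "u \<in> darts M" "v \<in> orb (sigma M) u"
  shows "(u, v) \<in> (Rel M)\<^sup>*"
proof -
  obtain j where v: "v = (sigma M ^^ j) u" using assms(3) by (auto simp: orb_def)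
  have "(u, (sigma M ^^ j) u) \<in> (Rel M)\<^sup>*" for j
  proof (induction j)
    case (Suc j)
    have "(sigma M ^^ j) u \<in> darts M" using funpow_in[OF assms(1,2)] .
    then have "((sigma M ^^ j) u, (sigma M ^^ Suc j) u) \<in> Rel M" unfolding Rel_def by auto
    then show ?case using Suc rtrancl_into_rtrancl by metis
  qed simp
  then show ?thesis using v by simp
qed

lemma Rel_sym:
  assumes al: "\<forall>x\<in>darts M. alpha M x \<in> darts M \<and> alpha M (alpha M x) = x"
    and fin: "finite (darts M)" and bs: "bij_betw (sigma M) (darts M) (darts M)"
    and uv: "(u, v) \<in> (Rel M)\<^sup>*" and u: "u \<in> darts M"
  shows "(v, u) \<in> (Rel M)\<^sup>*"
  using uv u
proof (induction rule: rtrancl_induct)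
  case (step y z)
  have yD: "y \<in> darts M" using Rel_closed[OF _ bs step(1) step(4)] al by auto
  have "(z, y) \<in> (Rel M)\<^sup>*"
  proof (cases "z = alpha M y")
    case True
    then have "(z, alpha M z) \<in> Rel M" using al yD unfolding Rel_def by auto
    then show ?thesis using True al yD by auto
  next
    case False
    then have zy: "z = sigma M y" using step(2) unfolding Rel_def by auto
    then have zD: "z \<in> darts M" using yD bs bij_betw_apply by metis
    have "z \<in> orb (sigma M) y" using zy by simp
    then have "y \<in> orb (sigma M) z" using orb_sym[OF fin bs yD] by simp
    then show ?thesis using Rel_orb[OF bs zD] by simp
  qed
  then show ?case using step by (meson rtrancl_trans)
qed simp

lemma connected_from_root:
  assumes al: "\<forall>x\<in>darts M. alpha M x \<in> darts M \<and> alpha M (alpha M x) = x"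
    and fin: "finite (darts M)" and bs: "bij_betw (sigma M) (darts M) (darts M)"
    and r: "r \<in> darts M" and reach: "\<forall>y\<in>darts M. (r, y) \<in> (Rel M)\<^sup>*"
  shows "connected_map M"
  unfolding connected_map_Rel
proof (intro ballI)
  fix x y assume "x \<in> darts M" "y \<in> darts M"
  then have "(x, r) \<in> (Rel M)\<^sup>*" "(r, y) \<in> (Rel M)\<^sup>*"
    using Rel_sym[OF al fin bs, of r x] reach r by auto
  then show "(x, y) \<in> (Rel M)\<^sup>*" by (meson rtrancl_trans)
qed

lemma skip1:
  assumes "sigma U z \<notin> {root U, alpha U (root U)}"
  shows "skip_next U z = sigma U z"
proof -
  have "(LEAST j. 0 < j \<and> (sigma U ^^ j) z \<notin> {root U, alpha U (root U)}) = 1"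
    using assms by (intro Least_equality) auto
  then show ?thesis unfolding skip_next_def Let_def by simp
qed

lemma skip2:
  assumes "sigma U z \<in> {root U, alpha U (root U)}" "sigma U (sigma U z) \<notin> {root U, alpha U (root U)}"
  shows "skip_next U z = sigma U (sigma U z)"
proof -
  have "(LEAST j. 0 < j \<and> (sigma U ^^ j) z \<notin> {root U, alpha U (root U)}) = 2"
  proof (rule Least_equality)
    show "0 < (2::nat) \<and> (sigma U ^^ 2) z \<notin> {root U, alpha U (root U)}"
      using assms(2) by (simp add: numeral_2_eq_2)
    fix y assume y: "0 < y \<and> (sigma U ^^ y) z \<notin> {root U, alpha U (root U)}"
    show "2 \<le> y"
    proof (rule ccontr)
      assume "\<not> 2 \<le> y" then have "y = 1" using y by auto
      then show False using y assms(1) by simp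
    qed
  qed
  then show ?thesis unfolding skip_next_def Let_def by (simp add: numeral_2_eq_2)
qed

lemma skip3:
  assumes "sigma U z \<in> {root U, alpha U (root U)}" "sigma U (sigma U z) \<in> {root U, alpha U (root U)}"
    "sigma U (sigma U (sigma U z)) \<notin> {root U, alpha U (root U)}"
  shows "skip_next U z = sigma U (sigma U (sigma U z))"
proof -
  have "(LEAST j. 0 < j \<and> (sigma U ^^ j) z \<notin> {root U, alpha U (root U)}) = 3"
  proof (rule Least_equality)
    show "0 < (3::nat) \<and> (sigma U ^^ 3) z \<notin> {root U, alpha U (root U)}"
      using assms(3) by (simp add: numeral_3_eq_3)
    fix y assume y: "0 < y \<and> (sigma U ^^ y) z \<notin> {root U, alpha U (root U)}"
    show "3 \<le> y"
    proof (rule ccontr)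
      assume "\<not> 3 \<le> y" then have "y = 1 \<or> y = 2" using y by auto
      then show False using y assms(1,2) by (auto simp: numeral_2_eq_2)
    qed
  qed
  then show ?thesis unfolding skip_next_def Let_def by (simp add: numeral_3_eq_3)
qed

lemma iso_orb:
  assumes "\<forall>x\<in>S. f1 x \<in> S" "\<forall>x\<in>S. g (f1 x) = f2 (g x)" "x \<in> S"
  shows "g ` orb f1 x = orb f2 (g x)"
proof -
  have "(f1^^j) x \<in> S \<and> g ((f1^^j) x) = (f2^^j) (g x)" for j
    by (induction j) (use assms in auto)
  then show ?thesis unfolding orb_def by (auto simp: image_iff) metis
qed


locale nm =
  fixes M :: dmap
  assumes rpm: "rooted_planar_map M" and ne: "darts M \<noteq> {}"
begin

abbreviation "D \<equiv> darts M"
abbreviation "al \<equiv> alpha M"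
abbreviation "sg \<equiv> sigma M"
abbreviation "rho \<equiv> root M"
abbreviation "ph \<equiv> phi M"
definition "na = fresh D"
definition "nb = Suc na"
definition "s1 = ins sg rho na"
definition "ph1 = ins ph rho na"
definition "m = per ph rho"
definition "Ob = orb ph rho"
definition "pos x = (LEAST t. 0 < t \<and> (ph^^t) rho = x)"
definition "seg x = {(ph^^t) rho | t. pos x < t \<and> t \<le> m}"
definition "goodX = {x \<in> Ob. seg x \<inter> orb sg x = {}}"
definition "kk = card (orb sg ` Ob)"
definition "val y = (case y of None \<Rightarrow> kk | Some x \<Rightarrow> card (orb sg ` seg x))"
definition "G = insert None (Some ` goodX)"
definition "DU = insert nb (insert na D)"
definition "al' = al(na := nb, nb := na)"

lemma fin: "finite D" using rpm unfolding rooted_planar_map_def by auto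
lemma alD: "\<forall>x\<in>D. al x \<in> D \<and> al x \<noteq> x \<and> al (al x) = x" using rpm unfolding rooted_planar_map_def by auto
lemma bs: "bij_betw sg D D" using rpm unfolding rooted_planar_map_def by auto
lemma rD: "rho \<in> D" using rpm ne unfolding rooted_planar_map_def by auto
lemma conn: "connected_map M" using rpm unfolding rooted_planar_map_def by auto
lemma euler: "nvertices M + nfaces M = nedges M + 2" using rpm unfolding rooted_planar_map_def by auto
lemma naD: "na \<notin> D" using fresh_notin fin na_def by auto
lemma nbD: "nb \<notin> D" using fresh_notin fin na_def nb_def by auto
lemma nab: "na \<noteq> nb" using nb_def by auto
lemma sgD: "z \<in> D \<Longrightarrow> sg z \<in> D" using bs bij_betw_apply by metis
lemma ph_eq: "ph z = al (sg z)" by (simp add: phi_def)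

lemma bal: "bij_betw al D D"
proof -
  have "inj_on al D" using alD by (metis inj_onI)
  moreover have "al ` D = D" using alD by (auto simp: image_iff) metis
  ultimately show ?thesis by (simp add: bij_betw_def)
qed

lemma bph: "bij_betw ph D D"
proof -
  have "bij_betw (al \<circ> sg) D D" using bij_betw_trans[OF bs bal] .
  then show ?thesis by (simp add: phi_def)
qed

lemma s1_rho: "s1 rho = na" by (simp add: s1_def ins_def)
lemma s1_na: "s1 na = sg rho" using naD rD by (auto simp: s1_def ins_def)
lemma s1_z: "z \<noteq> rho \<Longrightarrow> z \<noteq> na \<Longrightarrow> s1 z = sg z" by (simp add: s1_def ins_def)
lemma s1_hyp: "\<forall>z\<in>D-{rho}. s1 z = sg z" using naD s1_z by auto
lemma bs1: "bij_betw s1 (insert na D) (insert na D)"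
  using ins_bij[OF fin bs rD naD s1_rho s1_na s1_hyp] .
lemmas io1 = ins_orb[OF fin bs rD naD s1_rho s1_na s1_hyp]
lemma fin1: "finite (insert na D)" using fin by simp

lemma ph1_rho: "ph1 rho = na" by (simp add: ph1_def ins_def)
lemma ph1_na: "ph1 na = ph rho" using naD rD by (auto simp: ph1_def ins_def)
lemma ph1_hyp: "\<forall>z\<in>D-{rho}. ph1 z = ph z" using naD by (auto simp: ph1_def ins_def)
lemma bph1: "bij_betw ph1 (insert na D) (insert na D)"
  using ins_bij[OF fin bph rD naD ph1_rho ph1_na ph1_hyp] .
lemmas iph1 = ins_orb[OF fin bph rD naD ph1_rho ph1_na ph1_hyp]

lemma U_darts: "darts (mkU M y) = DU" by (simp add: mkU_def DU_def na_def nb_def)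
lemma U_alpha: "alpha (mkU M y) = al'" by (simp add: mkU_def al'_def na_def nb_def)
lemma U_root: "root (mkU M y) = nb" by (simp add: mkU_def na_def nb_def)
lemma U_sigma_None: "sigma (mkU M None) = s1(nb := nb)" by (simp add: mkU_def s1_def na_def nb_def)
lemma U_sigma_Some: "sigma (mkU M (Some x)) = ins s1 x nb" by (simp add: mkU_def s1_def na_def nb_def)

lemma al'_na: "al' na = nb" by (simp add: al'_def)
lemma al'_nb: "al' nb = na" using nab by (simp add: al'_def)
lemma al'_z: "z \<in> D \<Longrightarrow> al' z = al z" using naD nbD by (auto simp: al'_def)

lemma finU: "finite DU" using fin by (simp add: DU_def)

lemma alU: "\<forall>x\<in>DU. al' x \<in> DU \<and> al' x \<noteq> x \<and> al' (al' x) = x"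
  using alD naD nbD nab by (auto simp: DU_def al'_def)

lemma bal': "bij_betw al' DU DU"
proof -
  have "inj_on al' DU" using alU by (metis inj_onI)
  moreover have "al' ` DU = DU" using alU by (auto simp: image_iff) metis
  ultimately show ?thesis by (simp add: bij_betw_def)
qed

definition "Y = insert None (Some ` insert na D)"

lemma sigU_facts:
  assumes "y \<in> Y"
  shows "bij_betw (sigma (mkU M y)) DU DU" "\<forall>z\<in>D. orb (sigma (mkU M y)) z \<inter> D = orb sg z"
proof -
  have "bij_betw (sigma (mkU M y)) DU DU \<and> (\<forall>z\<in>D. orb (sigma (mkU M y)) z \<inter> D = orb sg z)"
  proof (cases y)
    case None
    let ?g = "s1(nb := nb)"
    have h: "\<forall>z\<in>insert na D. ?g z = s1 z" using nab nbD by auto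
    have nb1: "nb \<notin> insert na D" using nab nbD by auto
    have g1: "?g nb = nb" by simp
    have "bij_betw ?g DU DU" using fix_bij[where g="s1(nb := nb)", OF bs1 nb1 g1 h] by (simp add: DU_def)
    moreover have "orb ?g z \<inter> D = orb sg z" if "z \<in> D" for z
      using fix_orb(2)[where g="s1(nb := nb)", OF bs1 nb1 g1 h, of z] io1(3)[of z] that by simp
    ultimately show ?thesis using None U_sigma_None by simp
  next
    case (Some x)
    then have x: "x \<in> insert na D" using assms by (auto simp: Y_def)
    let ?g = "ins s1 x nb"
    have nb1: "nb \<notin> insert na D" using nab nbD by auto
    have g1: "?g x = nb" by (simp add: ins_def)
    have g2: "?g nb = s1 x" using x nb1 by (auto simp: ins_def)
    have g3: "\<forall>z\<in>insert na D-{x}. ?g z = s1 z" using nb1 by (auto simp: ins_def)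
    have "bij_betw ?g DU DU" using ins_bij[OF fin1 bs1 x nb1 g1 g2 g3] by (simp add: DU_def)
    moreover have "orb ?g z \<inter> D = orb sg z" if "z \<in> D" for z
      using ins_orb(3)[OF fin1 bs1 x nb1 g1 g2 g3, of z] io1(3)[of z] that by blast
    ultimately show ?thesis using Some U_sigma_Some by simp
  qed
  then show "bij_betw (sigma (mkU M y)) DU DU" "\<forall>z\<in>D. orb (sigma (mkU M y)) z \<inter> D = orb sg z" by auto
qed

lemma sigU_rho: "y \<in> Y \<Longrightarrow> sigma (mkU M y) rho \<in> {na, nb}"
  using rD naD nbD nab
  by (cases y) (auto simp: U_sigma_None U_sigma_Some ins_def s1_rho)

lemma connU:
  assumes "y \<in> Y"
  shows "connected_map (mkU M y)"
proof -
  let ?U = "mkU M y"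
  note sf = sigU_facts[OF assms]
  have al2: "\<forall>x\<in>darts ?U. alpha ?U x \<in> darts ?U \<and> alpha ?U (alpha ?U x) = x"
    using alU by (simp add: U_darts U_alpha)
  have bsU: "bij_betw (sigma ?U) (darts ?U) (darts ?U)" using sf(1) by (simp add: U_darts)
  have rU: "rho \<in> darts ?U" using rD by (simp add: U_darts DU_def)
  have reachD: "(rho, w) \<in> (Rel ?U)\<^sup>*" if "w \<in> D" for w
  proof -
    have "(rho, w) \<in> (Rel M)\<^sup>*" using conn rD that unfolding connected_map_Rel by auto
    then show ?thesis
    proof (induction rule: rtrancl_induct)
      case (step u v)
      have uD: "u \<in> D" using Rel_closed[OF _ bs step(1) rD] alD by auto
      have "(u, v) \<in> (Rel ?U)\<^sup>*"
      proof (cases "v = al u")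
        case True
        then have "(u, v) \<in> Rel ?U" using uD al'_z[OF uD] unfolding Rel_def
          by (auto simp: U_darts U_alpha DU_def)
        then show ?thesis by auto
      next
        case False
        then have "v = sg u" using step(2) unfolding Rel_def by auto
        then have "v \<in> orb (sigma ?U) u" using sf(2) uD orb_f_self[of sg u] by blast
        moreover have "u \<in> darts ?U" using uD by (simp add: U_darts DU_def)
        ultimately show ?thesis using Rel_orb[OF bsU] by blast
      qed
      then show ?case using step(3) by (meson rtrancl_trans)
    qed simp
  qed
  have s: "(rho, sigma ?U rho) \<in> Rel ?U" using rU unfolding Rel_def by auto
  have s2: "(sigma ?U rho, alpha ?U (sigma ?U rho)) \<in> Rel ?U"
    using sigU_rho[OF assms] unfolding Rel_def by (auto simp: U_darts DU_def)
  have "(rho, na) \<in> (Rel ?U)\<^sup>*" "(rho, nb) \<in> (Rel ?U)\<^sup>*"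
    using s s2 sigU_rho[OF assms] al'_na al'_nb by (auto simp: U_alpha)
  then have "\<forall>w\<in>darts ?U. (rho, w) \<in> (Rel ?U)\<^sup>*" using reachD by (auto simp: U_darts DU_def)
  then show ?thesis using connected_from_root[OF al2 _ bsU rU] finU by (simp add: U_darts)
qed

end


context nm
begin

lemma Ob_sub: "Ob \<subseteq> D" using orb_subset[OF bph rD] by (simp add: Ob_def)
lemma rOb: "rho \<in> Ob" by (simp add: Ob_def)

lemma m_props: "0 < m" "(ph^^m) rho = rho" "\<And>t. 0 < t \<Longrightarrow> t < m \<Longrightarrow> (ph^^t) rho \<noteq> rho"
  using per_props[OF fin bph rD] unfolding m_def by auto

lemma pos_props:
  assumes "x \<in> Ob" shows "0 < pos x" "pos x \<le> m" "(ph^^(pos x)) rho = x"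
proof -
  obtain t where t: "0 < t" "t \<le> m" "x = (ph^^t) rho"
    using orb_per[OF fin bph rD] assms unfolding Ob_def m_def by blast
  have P: "0 < pos x \<and> (ph^^(pos x)) rho = x"
    unfolding pos_def by (rule LeastI[of _ t]) (use t in auto)
  then show "0 < pos x" "(ph^^(pos x)) rho = x" by auto
  have "pos x \<le> t" unfolding pos_def by (rule Least_le) (use t in auto)
  then show "pos x \<le> m" using t by simp
qed

lemma pos_W:
  assumes "0 < t" "t \<le> m" shows "pos ((ph^^t) rho) = t"
  unfolding pos_def
proof (rule Least_equality)
  show "0 < t \<and> (ph^^t) rho = (ph^^t) rho" using assms by simp
  fix t' assume t': "0 < t' \<and> (ph^^t') rho = (ph^^t) rho"
  show "t \<le> t'"
  proof (rule ccontr)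
    assume "\<not> t \<le> t'"
    then have "t' < t" "t - t' < per ph rho" using t' assms unfolding m_def by auto
    then show False using funpow_inj_per[OF fin bph rD, of t' t] t' by auto
  qed
qed

lemma pos_rho: "pos rho = m" using pos_W[of m] m_props by simp
lemma seg_rho: "seg rho = {}" using pos_rho by (auto simp: seg_def)
lemma pos_lt: "x \<in> Ob \<Longrightarrow> x \<noteq> rho \<Longrightarrow> pos x < m"
  using pos_props[of x] m_props(2) by (metis le_neq_implies_less)
lemma seg_Ob: "seg x \<subseteq> Ob" by (auto simp: seg_def Ob_def)
lemma seg_D: "seg x \<subseteq> D" using seg_Ob Ob_sub by blast
lemma rho_good: "rho \<in> goodX" using seg_rho rOb by (simp add: goodX_def)

lemma card_DU: "card DU = card D + 2"
  using fin naD nbD nab by (simp add: DU_def)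

lemma nvM: "nvertices M = card (orb sg ` D)" using ne by (simp add: nvertices_def)
lemma nfM: "nfaces M = card (orb ph ` D)" using ne by (simp add: nfaces_def phi_def)

lemma phU: "phi (mkU M y) z = al' (sigma (mkU M y) z)" by (simp add: phi_def U_alpha)

lemma bphU: "y \<in> Y \<Longrightarrow> bij_betw (phi (mkU M y)) DU DU"
  using bij_betw_trans[OF sigU_facts(1) bal'] by (simp add: phi_def U_alpha)

lemma rpmU:
  assumes y: "y \<in> Y"
    and cnt: "card (orb (sigma (mkU M y)) ` DU) + card (orb (phi (mkU M y)) ` DU)
               = card (orb sg ` D) + card (orb ph ` D) + 1"
  shows "rooted_planar_map (mkU M y)"
proof -
  have e: "card (orb sg ` D) + card (orb ph ` D) = card D div 2 + 2"
    using euler nvM nfM by (simp add: nedges_def)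
  have ne': "DU \<noteq> {}" by (simp add: DU_def)
  have "nvertices (mkU M y) + nfaces (mkU M y) = nedges (mkU M y) + 2"
    using cnt e card_DU ne' by (simp add: nvertices_def nfaces_def nedges_def U_darts)
  moreover have "\<forall>x\<in>darts (mkU M y). alpha (mkU M y) x \<in> darts (mkU M y) \<and>
      alpha (mkU M y) x \<noteq> x \<and> alpha (mkU M y) (alpha (mkU M y) x) = x"
    using alU by (simp add: U_darts U_alpha)
  ultimately show ?thesis
    using finU sigU_facts(1)[OF y] connU[OF y]
    unfolding rooted_planar_map_def by (simp add: U_darts U_root DU_def U_alpha al'_na al'_nb)
qed

lemma Pi_iso_gen:
  assumes sk: "\<forall>z\<in>D. skip_next (mkU M y) z = sg z" and ska: "skip_next (mkU M y) na = sg rho"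
  shows "map_iso (Pi (mkU M y)) M"
proof -
  have dP: "darts (Pi (mkU M y)) = D"
    using naD nbD nab by (auto simp: Pi_def Let_def U_darts U_alpha U_root al'_nb DU_def)
  have aP: "alpha (Pi (mkU M y)) = al'" by (simp add: Pi_def Let_def U_alpha)
  have sP: "sigma (Pi (mkU M y)) = skip_next (mkU M y)" by (simp add: Pi_def Let_def)
  have "(THE d. d \<in> D \<and> skip_next (mkU M y) d = skip_next (mkU M y) na) = rho"
  proof (rule the_equality)
    show "rho \<in> D \<and> skip_next (mkU M y) rho = skip_next (mkU M y) na" using rD sk ska by auto
    fix d assume "d \<in> D \<and> skip_next (mkU M y) d = skip_next (mkU M y) na"
    then have "d \<in> D" "sg d = sg rho" using sk ska by auto
    then show "d = rho" using bs rD by (metis bij_betw_def inj_onD)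
  qed
  then have rP: "root (Pi (mkU M y)) = rho"
    using naD nbD nab ne by (auto simp: Pi_def Let_def U_darts U_alpha U_root al'_nb DU_def)
  show ?thesis unfolding map_iso_def
    by (rule exI[of _ id]) (use dP aP sP rP sk al'_z in auto)
qed

lemma nedgesU: "nedges (mkU M y) = nedges M + 1"
  using card_DU by (simp add: nedges_def U_darts)

lemma outvU_eq: "outv (mkU M y) = card (orb (sigma (mkU M y)) ` orb (phi (mkU M y)) nb)"
  by (simp add: outv_def outer_face_def U_darts U_root DU_def)

lemma one_cornerI:
  assumes "rooted_planar_map (mkU M y)"
    "orb (sigma (mkU M y)) nb \<inter> orb (phi (mkU M y)) nb = {nb}"
  shows "one_corner (mkU M y)"
  using assms by (simp add: one_corner_def outer_face_def U_root)

end


context nm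
begin

lemma del_eq: "{root (mkU M y), alpha (mkU M y) (root (mkU M y))} = {nb, na}"
  by (simp add: U_root U_alpha al'_nb)

lemma skipU1: "sigma (mkU M y) z \<notin> {nb, na} \<Longrightarrow> skip_next (mkU M y) z = sigma (mkU M y) z"
  using skip1[of "mkU M y" z] del_eq by simp
lemma skipU2: "sigma (mkU M y) z \<in> {nb, na} \<Longrightarrow> sigma (mkU M y) (sigma (mkU M y) z) \<notin> {nb, na} \<Longrightarrow>
   skip_next (mkU M y) z = sigma (mkU M y) (sigma (mkU M y) z)"
  using skip2[of "mkU M y" z] del_eq by simp
lemma skipU3: "sigma (mkU M y) z \<in> {nb, na} \<Longrightarrow> sigma (mkU M y) (sigma (mkU M y) z) \<in> {nb, na} \<Longrightarrow>
   sigma (mkU M y) (sigma (mkU M y) (sigma (mkU M y) z)) \<notin> {nb, na} \<Longrightarrow>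
   skip_next (mkU M y) z = sigma (mkU M y) (sigma (mkU M y) (sigma (mkU M y) z))"
  using skip3[of "mkU M y" z] del_eq by simp

lemma notdel: "z \<in> D \<Longrightarrow> z \<notin> {nb, na}" using naD nbD by auto

lemma nb1: "nb \<notin> insert na D" using nab nbD by auto
lemma DU_eq: "DU = D \<union> {na, nb}" by (auto simp: DU_def)

lemma card_restrict_U:
  assumes "y \<in> Y" "T \<subseteq> D"
  shows "card (orb (sigma (mkU M y)) ` T) = card (orb sg ` T)"
  using orb_restrict_card[OF finU sigU_facts(1)[OF assms(1)], of D sg T] sigU_facts(2)[OF assms(1)] assms(2)
  by (auto simp: DU_def)

lemma case_None:
  shows "one_corner (mkU M None)" "map_iso (Pi (mkU M None)) M" "outv (mkU M None) = kk + 1"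
proof -
  let ?U = "mkU M None"
  let ?s = "sigma ?U" and ?p = "phi ?U"
  have yY: "None \<in> Y" by (simp add: Y_def)
  have sv: "?s = s1(nb := nb)" by (rule U_sigma_None)
  have h: "\<forall>z\<in>insert na D. (s1(nb:=nb)) z = s1 z" using nab nbD by auto
  have g1: "(s1(nb:=nb)) nb = nb" by simp
  note fo = fix_orb[where g="s1(nb := nb)", OF bs1 nb1 g1 h]
  have rhonb: "rho \<noteq> nb" using rD nbD by auto
  have p_rho: "?p rho = nb" using rhonb by (simp add: phU sv s1_rho al'_na)
  have p_nb: "?p nb = ph1 rho" by (simp add: phU sv al'_nb ph1_rho)
  have p_hyp: "\<forall>z\<in>insert na D - {rho}. ?p z = ph1 z"
  proof
    fix z assume z: "z \<in> insert na D - {rho}"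
    show "?p z = ph1 z"
    proof (cases "z = na")
      case True then show ?thesis using nab sgD[OF rD] al'_z[OF sgD[OF rD]]
        by (simp add: phU sv s1_na ph1_na ph_eq)
    next
      case False
      then have zD: "z \<in> D" "z \<noteq> rho" using z by auto
      then have "z \<noteq> nb" using nbD by auto
      then show ?thesis using zD False s1_z[of z] al'_z[OF sgD[OF zD(1)]] ph1_hyp
        by (simp add: phU sv ph_eq)
    qed
  qed
  have rho1: "rho \<in> insert na D" using rD by simp
  note ip = ins_orb[OF fin1 bph1 rho1 nb1 p_rho p_nb p_hyp]
  have Fc: "card (orb ?p ` DU) = card (orb ph ` D)"
    using ins_card[OF fin1 bph1 rho1 nb1 p_rho p_nb p_hyp] ins_card[OF fin bph rD naD ph1_rho ph1_na ph1_hyp]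
    by (simp add: DU_def)
  have Vc: "card (orb ?s ` DU) = card (orb sg ` D) + 1"
    using fix_card[where g="s1(nb := nb)", OF fin1 bs1 nb1 g1 h] ins_card[OF fin bs rD naD s1_rho s1_na s1_hyp] sv
    by (simp add: DU_def)
  have rp: "rooted_planar_map ?U" using rpmU[OF yY] Fc Vc by simp
  have F1: "orb ?p nb = insert nb (insert na Ob)" using ip(2) iph1(1) by (simp add: Ob_def)
  have S1: "orb ?s nb = {nb}" using fo(1) sv by simp
  show "one_corner ?U" using one_cornerI[OF rp] F1 S1 by auto
  have sk: "\<forall>z\<in>D. skip_next ?U z = sg z"
  proof
    fix z assume zD: "z \<in> D"
    show "skip_next ?U z = sg z"
    proof (cases "z = rho")
      case True
      have "?s rho = na" using rhonb by (simp add: sv s1_rho)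
      moreover have "?s na = sg rho" using nab by (simp add: sv s1_na)
      ultimately show ?thesis using skipU2[of None rho] notdel[OF sgD[OF rD]] True by simp
    next
      case False
      have "?s z = sg z" using zD False s1_z[of z] naD nbD by (auto simp: sv)
      then show ?thesis using skipU1[of None z] notdel[OF sgD[OF zD]] by simp
    qed
  qed
  have ska: "skip_next ?U na = sg rho"
  proof -
    have "?s na = sg rho" using nab by (simp add: sv s1_na)
    then show ?thesis using skipU1[of None na] notdel[OF sgD[OF rD]] by simp
  qed
  show "map_iso (Pi ?U) M" using Pi_iso_gen[OF sk ska] .
  have "orb ?s na = orb ?s rho" using fo(2)[of na] fo(2)[of rho] io1(1,2) rD sv by simp
  then have e: "orb ?s ` insert nb (insert na Ob) = insert {nb} (orb ?s ` Ob)" using S1 rOb by auto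
  have nin: "{nb} \<notin> orb ?s ` Ob"
  proof
    assume "{nb} \<in> orb ?s ` Ob"
    then obtain z where "z \<in> Ob" "{nb} = orb ?s z" by auto
    then have "z \<in> {nb}" "z \<in> D" using orb_self[of z ?s] Ob_sub by auto
    then show False using nbD by auto
  qed
  have "finite (orb ?s ` Ob)" using fin Ob_sub finite_subset by blast
  then have "card (orb ?s ` insert nb (insert na Ob)) = card (orb ?s ` Ob) + 1" using e nin by simp
  then show "outv ?U = kk + 1" using outvU_eq[of None] F1 card_restrict_U[OF yY Ob_sub] by (simp add: kk_def)
qed

lemma case_rho:
  shows "one_corner (mkU M (Some rho))" "map_iso (Pi (mkU M (Some rho))) M" "outv (mkU M (Some rho)) = 1"
proof -
  let ?U = "mkU M (Some rho)"
  let ?s = "sigma ?U" and ?p = "phi ?U"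
  have yY: "Some rho \<in> Y" using rD by (simp add: Y_def)
  have sv: "?s = ins s1 rho nb" by (rule U_sigma_Some)
  have rhonb: "rho \<noteq> nb" using rD nbD by auto
  have rho1: "rho \<in> insert na D" using rD by simp
  have s_rho: "?s rho = nb" by (simp add: sv ins_def)
  have s_nb: "?s nb = s1 rho" using rhonb by (simp add: sv ins_def)
  have s_hyp: "\<forall>z\<in>insert na D - {rho}. ?s z = s1 z" using nb1 by (auto simp: sv ins_def)
  have s_na: "?s na = sg rho"
  proof -
    have "na \<in> insert na D - {rho}" using naD rD by auto
    then show ?thesis using s_hyp s1_na by metis
  qed
  have p_nb: "?p nb = nb" by (simp add: phU s_nb s1_rho al'_na)
  have p_hyp: "\<forall>z\<in>insert na D. ?p z = ph1 z"
  proof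
    fix z assume z: "z \<in> insert na D"
    show "?p z = ph1 z"
    proof (cases "z = rho")
      case True then show ?thesis by (simp add: phU s_rho al'_nb ph1_rho)
    next
      case False
      show ?thesis
      proof (cases "z = na")
        case True then show ?thesis using al'_z[OF sgD[OF rD]]
          by (simp add: phU s_na ph1_na ph_eq)
      next
        case False
        then have zD: "z \<in> D" "z \<noteq> rho" using z \<open>z \<noteq> rho\<close> by auto
        then show ?thesis using s_hyp s1_z[of z] False al'_z[OF sgD[OF zD(1)]] ph1_hyp
          by (simp add: phU ph_eq)
      qed
    qed
  qed
  have Fc: "card (orb ?p ` DU) = card (orb ph ` D) + 1"
    using fix_card[OF fin1 bph1 nb1 p_nb p_hyp] ins_card[OF fin bph rD naD ph1_rho ph1_na ph1_hyp]
    by (simp add: DU_def)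
  have Vc: "card (orb ?s ` DU) = card (orb sg ` D)"
    using ins_card[OF fin1 bs1 rho1 nb1 s_rho s_nb s_hyp] ins_card[OF fin bs rD naD s1_rho s1_na s1_hyp]
    by (simp add: DU_def)
  have rp: "rooted_planar_map ?U" using rpmU[OF yY] Fc Vc by simp
  have F1: "orb ?p nb = {nb}" using orb_fixed p_nb by metis
  show "one_corner ?U" using one_cornerI[OF rp] F1 by auto
  have sk: "\<forall>z\<in>D. skip_next ?U z = sg z"
  proof
    fix z assume zD: "z \<in> D"
    show "skip_next ?U z = sg z"
    proof (cases "z = rho")
      case True
      then show ?thesis using skipU3[of "Some rho" rho] notdel[OF sgD[OF rD]] s_rho s_nb s1_rho s_na by simp
    next
      case False
      have "?s z = sg z" using zD False s1_z[of z] naD s_hyp by auto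
      then show ?thesis using skipU1[of "Some rho" z] notdel[OF sgD[OF zD]] by simp
    qed
  qed
  have ska: "skip_next ?U na = sg rho"
    using s_na skipU1[of "Some rho" na] notdel[OF sgD[OF rD]] by simp
  show "map_iso (Pi ?U) M" using Pi_iso_gen[OF sk ska] .
  show "outv ?U = 1" using outvU_eq[of "Some rho"] F1 by simp
qed

end


context nm
begin

lemma sX:
  assumes xD: "x \<in> D" and xr: "x \<noteq> rho"
  shows "sigma (mkU M (Some x)) x = nb" "sigma (mkU M (Some x)) nb = sg x"
    "sigma (mkU M (Some x)) rho = na" "sigma (mkU M (Some x)) na = sg rho"
    "\<forall>z\<in>D-{rho,x}. sigma (mkU M (Some x)) z = sg z"
    "\<forall>z\<in>insert na D - {x}. sigma (mkU M (Some x)) z = s1 z"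
proof -
  have xn: "x \<noteq> na" "x \<noteq> nb" using xD naD nbD by auto
  have rn: "rho \<noteq> nb" "rho \<noteq> na" using rD naD nbD by auto
  show "sigma (mkU M (Some x)) x = nb" by (simp add: U_sigma_Some ins_def)
  show "sigma (mkU M (Some x)) nb = sg x" using xn xr s1_z[of x] by (simp add: U_sigma_Some ins_def)
  show "sigma (mkU M (Some x)) rho = na" using xr rn s1_rho by (simp add: U_sigma_Some ins_def)
  show "sigma (mkU M (Some x)) na = sg rho" using xn nab s1_na by (simp add: U_sigma_Some ins_def)
  show "\<forall>z\<in>D-{rho,x}. sigma (mkU M (Some x)) z = sg z"
    using naD nbD s1_z by (auto simp: U_sigma_Some ins_def)
  show "\<forall>z\<in>insert na D - {x}. sigma (mkU M (Some x)) z = s1 z"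
    using nb1 by (auto simp: U_sigma_Some ins_def)
qed

lemma pX:
  assumes xD: "x \<in> D" and xr: "x \<noteq> rho"
  shows "phi (mkU M (Some x)) rho = nb" "phi (mkU M (Some x)) nb = ph x"
    "phi (mkU M (Some x)) x = na" "phi (mkU M (Some x)) na = ph rho"
    "\<forall>z\<in>D-{rho,x}. phi (mkU M (Some x)) z = ph z"
proof -
  note s = sX[OF assms]
  show "phi (mkU M (Some x)) rho = nb" using s(3) by (simp add: phU al'_na)
  show "phi (mkU M (Some x)) nb = ph x" using s(2) al'_z[OF sgD[OF xD]] by (simp add: phU ph_eq)
  show "phi (mkU M (Some x)) x = na" using s(1) by (simp add: phU al'_nb)
  show "phi (mkU M (Some x)) na = ph rho" using s(4) al'_z[OF sgD[OF rD]] by (simp add: phU ph_eq)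
  show "\<forall>z\<in>D-{rho,x}. phi (mkU M (Some x)) z = ph z"
    using s(5) al'_z sgD by (simp add: phU ph_eq)
qed

lemma oX:
  assumes xD: "x \<in> D" and xr: "x \<noteq> rho"
  shows "orb (sigma (mkU M (Some x))) nb = insert nb (orb s1 x)"
    "orb (sigma (mkU M (Some x))) nb \<inter> D = orb sg x"
    "card (orb (sigma (mkU M (Some x))) ` DU) = card (orb sg ` D)"
proof -
  note s = sX[OF assms]
  have x1: "x \<in> insert na D" using xD by simp
  have "x \<noteq> na" using xD naD by auto
  then have "sigma (mkU M (Some x)) nb = s1 x" using s(2) s1_z[of x] xr by simp
  note io = ins_orb[OF fin1 bs1 x1 nb1 s(1) this s(6)]
  show A: "orb (sigma (mkU M (Some x))) nb = insert nb (orb s1 x)" using io(2) .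
  show "orb (sigma (mkU M (Some x))) nb \<inter> D = orb sg x" using A io1(3)[OF xD] nbD by auto
  show "card (orb (sigma (mkU M (Some x))) ` DU) = card (orb sg ` D)"
    using ins_card[OF fin1 bs1 x1 nb1 s(1) \<open>sigma (mkU M (Some x)) nb = s1 x\<close> s(6)]
      ins_card[OF fin bs rD naD s1_rho s1_na s1_hyp] by (simp add: DU_def)
qed

lemma obX:
  assumes xO: "x \<in> Ob" and xr: "x \<noteq> rho"
  shows "orb (phi (mkU M (Some x))) nb = insert nb (seg x)"
    "card (orb (phi (mkU M (Some x))) ` DU) = card (orb ph ` D) + 1"
proof -
  have xD: "x \<in> D" using xO Ob_sub by auto
  note p = pX[OF xD xr]
  have s: "0 < pos x" "pos x < per ph rho" using pos_props[OF xO] pos_lt[OF xO xr] by (auto simp: m_def)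
  have xe: "x = (ph^^(pos x)) rho" using pos_props[OF xO] by simp
  have yY: "Some x \<in> Y" using xD by (simp add: Y_def)
  have bij: "bij_betw (phi (mkU M (Some x))) (D \<union> {na, nb}) (D \<union> {na, nb})"
    using bphU[OF yY] DU_eq by simp
  have p5: "\<forall>z\<in>D-{rho, x}. phi (mkU M (Some x)) z = ph z" using p(5) .
  show "orb (phi (mkU M (Some x))) nb = insert nb (seg x)"
    using split_orb(1)[OF fin bph rD naD nbD nab s xe p(1) p(2) p(3) p(4) p5]
    by (simp add: seg_def m_def)
  show "card (orb (phi (mkU M (Some x))) ` DU) = card (orb ph ` D) + 1"
    using split_card[OF fin bph rD naD nbD nab s xe p(1) p(2) p(3) p(4) p5 bij] DU_eq by simp
qed

lemma case_good:
  assumes xg: "x \<in> goodX" and xr: "x \<noteq> rho"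
  shows "one_corner (mkU M (Some x))" "map_iso (Pi (mkU M (Some x))) M"
    "outv (mkU M (Some x)) = card (orb sg ` seg x) + 1"
proof -
  let ?U = "mkU M (Some x)"
  let ?s = "sigma ?U" and ?p = "phi ?U"
  have xO: "x \<in> Ob" and gs: "seg x \<inter> orb sg x = {}" using xg by (auto simp: goodX_def)
  have xD: "x \<in> D" using xO Ob_sub by auto
  have yY: "Some x \<in> Y" using xD by (simp add: Y_def)
  note s = sX[OF xD xr] and o = oX[OF xD xr] and ob = obX[OF xO xr]
  have rp: "rooted_planar_map ?U" using rpmU[OF yY] o(3) ob(2) by simp
  have int: "orb ?s nb \<inter> orb ?p nb = {nb}"
  proof -
    have "orb ?s nb \<inter> seg x = {}" using o(2) gs seg_D by blast
    then show ?thesis using ob(1) by auto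
  qed
  show "one_corner ?U" using one_cornerI[OF rp int] .
  have sk: "\<forall>z\<in>D. skip_next ?U z = sg z"
  proof
    fix z assume zD: "z \<in> D"
    show "skip_next ?U z = sg z"
    proof (cases "z = rho")
      case True
      then show ?thesis using skipU2[of "Some x" rho] notdel[OF sgD[OF rD]] s(3,4) by simp
    next
      case False
      show ?thesis
      proof (cases "z = x")
        case True
        then show ?thesis using skipU2[of "Some x" x] notdel[OF sgD[OF xD]] s(1,2) by simp
      next
        case False
        then have "?s z = sg z" using s(5) zD \<open>z \<noteq> rho\<close> by auto
        then show ?thesis using skipU1[of "Some x" z] notdel[OF sgD[OF zD]] by simp
      qed
    qed
  qed
  have ska: "skip_next ?U na = sg rho"
    using s(4) skipU1[of "Some x" na] notdel[OF sgD[OF rD]] by simp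
  show "map_iso (Pi ?U) M" using Pi_iso_gen[OF sk ska] .
  have nin: "orb ?s nb \<notin> orb ?s ` seg x"
  proof
    assume "orb ?s nb \<in> orb ?s ` seg x"
    then obtain z where z: "z \<in> seg x" "orb ?s nb = orb ?s z" by auto
    then have "z \<in> orb ?s nb \<inter> D" using seg_D orb_self[of z ?s] by auto
    then show False using o(2) gs z(1) by auto
  qed
  have "finite (orb ?s ` seg x)" using fin seg_D finite_subset by blast
  then have "card (orb ?s ` insert nb (seg x)) = card (orb ?s ` seg x) + 1" using nin by simp
  then show "outv ?U = card (orb sg ` seg x) + 1"
    using outvU_eq[of "Some x"] ob(1) card_restrict_U[OF yY seg_D] by simp
qed

lemma bad_seg:
  assumes xO: "x \<in> Ob" and xr: "x \<noteq> rho" and bad: "seg x \<inter> orb sg x \<noteq> {}"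
  shows "orb (sigma (mkU M (Some x))) nb \<inter> orb (phi (mkU M (Some x))) nb \<noteq> {nb}"
proof -
  have xD: "x \<in> D" using xO Ob_sub by auto
  obtain z where z: "z \<in> seg x" "z \<in> orb sg x" using bad by auto
  have "z \<in> orb (sigma (mkU M (Some x))) nb" using oX(2)[OF xD xr] z seg_D by auto
  moreover have "z \<in> orb (phi (mkU M (Some x))) nb" using obX(1)[OF xO xr] z by auto
  moreover have "z \<noteq> nb" using z seg_D nbD by auto
  ultimately show ?thesis by blast
qed

lemma bad_notOb:
  assumes xD: "x \<in> D" and xr: "x \<noteq> rho" and xO: "x \<notin> Ob"
  shows "orb (sigma (mkU M (Some x))) nb \<inter> orb (phi (mkU M (Some x))) nb \<noteq> {nb}"
proof -
  let ?p = "phi (mkU M (Some x))"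
  note p = pX[OF xD xr]
  define q where "q = per ph x"
  have q: "0 < q" "(ph^^q) x = x" "\<And>t. 0 < t \<Longrightarrow> t < q \<Longrightarrow> (ph^^t) x \<noteq> x"
    using per_props[OF fin bph xD] unfolding q_def by auto
  have nr: "(ph^^t) x \<noteq> rho" for t
  proof
    assume "(ph^^t) x = rho"
    then have "rho \<in> orb ph x" by (metis orb_funpow)
    then have "x \<in> orb ph rho" using orb_sym[OF fin bph xD] by simp
    then show False using xO by (simp add: Ob_def)
  qed
  have "(ph^^(Suc d)) x \<in> orb ?p nb" if "Suc d \<le> q" for d
    using that
  proof (induction d)
    case 0
    then show ?case using p(2) orb_f_self[of ?p nb] by simp
  next
    case (Suc d)
    then have w: "(ph^^(Suc d)) x \<in> orb ?p nb" by simp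
    have "(ph^^(Suc d)) x \<noteq> x" using q(3)[of "Suc d"] Suc.prems by simp
    moreover have "(ph^^(Suc d)) x \<in> D" using funpow_in[OF bph xD] .
    moreover have "(ph^^(Suc d)) x \<noteq> rho" using nr .
    ultimately have "?p ((ph^^(Suc d)) x) = ph ((ph^^(Suc d)) x)" using p(5) by blast
    then have "?p ((ph^^(Suc d)) x) = (ph^^(Suc (Suc d))) x" by simp
    then show ?case using orb_step[OF w] by simp
  qed
  then have "x \<in> orb ?p nb" using q(1,2) by (metis Suc_pred order_refl)
  moreover have "x \<in> orb (sigma (mkU M (Some x))) nb" using oX(2)[OF xD xr] xD by auto
  moreover have "x \<noteq> nb" using xD nbD by auto
  ultimately show ?thesis by blast
qed

lemma bad_na:
  shows "orb (sigma (mkU M (Some na))) nb \<inter> orb (phi (mkU M (Some na))) nb \<noteq> {nb}"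
proof -
  let ?s = "sigma (mkU M (Some na))" and ?p = "phi (mkU M (Some na))"
  have sv: "?s = ins s1 na nb" by (rule U_sigma_Some)
  have rn: "rho \<noteq> nb" "rho \<noteq> na" using rD naD nbD by auto
  have na1: "na \<in> insert na D" by simp
  have g1: "?s na = nb" by (simp add: sv ins_def)
  have g2: "?s nb = s1 na" using nab by (simp add: sv ins_def)
  have g3: "\<forall>z\<in>insert na D - {na}. ?s z = s1 z" using nb1 by (auto simp: sv ins_def)
  have "orb ?s nb = insert nb (orb s1 na)" using ins_orb(2)[OF fin1 bs1 na1 nb1 g1 g2 g3] .
  then have A: "rho \<in> orb ?s nb" using io1(2) by simp
  have srho: "?s rho = na" using g3 rn rD s1_rho by auto
  have p1: "?p rho = nb" by (simp add: phU srho al'_na)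
  have p2: "?p nb = ph rho" using g2 s1_na al'_z[OF sgD[OF rD]] by (simp add: phU ph_eq)
  have p3: "\<forall>z\<in>D-{rho}. ?p z = ph z"
  proof
    fix z assume z: "z \<in> D - {rho}"
    then have "?s z = sg z" using g3 s1_z[of z] naD by auto
    then show "?p z = ph z" using al'_z[OF sgD] z by (simp add: phU ph_eq)
  qed
  have "orb ?p nb = insert nb (orb ph rho)" using ins_orb(2)[OF fin bph rD nbD p1 p2 p3] .
  then have B: "rho \<in> orb ?p nb" by simp
  show ?thesis using A B rn by blast
qed

lemma classify:
  assumes y: "y \<in> Y" and c: "orb (sigma (mkU M y)) nb \<inter> orb (phi (mkU M y)) nb = {nb}"
  shows "y \<in> G"
proof (cases y)
  case None then show ?thesis by (simp add: G_def)
next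
  case (Some x)
  then have x: "x = na \<or> x \<in> D" using y by (auto simp: Y_def)
  show ?thesis
  proof (cases "x = na")
    case True then show ?thesis using bad_na c Some by simp
  next
    case False
    then have xD: "x \<in> D" using x by simp
    show ?thesis
    proof (cases "x = rho")
      case True then show ?thesis using rho_good Some by (simp add: G_def)
    next
      case False
      have "x \<in> Ob" using bad_notOb[OF xD False] c Some by auto
      moreover have "seg x \<inter> orb sg x = {}" using bad_seg[OF _ False] c Some \<open>x \<in> Ob\<close> by auto
      ultimately show ?thesis using Some by (simp add: G_def goodX_def)
    qed
  qed
qed

end


context nm
begin

lemma goodX_Ob: "goodX \<subseteq> Ob" by (auto simp: goodX_def)
lemma finOb: "finite Ob" using fin Ob_sub finite_subset by blast
lemma fin_goodX: "finite goodX" using finOb goodX_Ob finite_subset by blast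

lemma val_lt:
  assumes xg: "x \<in> goodX" shows "card (orb sg ` seg x) < kk"
proof -
  have xO: "x \<in> Ob" and gs: "seg x \<inter> orb sg x = {}" using xg unfolding goodX_def by blast+
  have sub: "orb sg ` seg x \<subseteq> orb sg ` Ob - {orb sg x}"
  proof
    fix Q assume "Q \<in> orb sg ` seg x"
    then obtain z where z: "z \<in> seg x" "Q = orb sg z" by blast
    have "z \<notin> orb sg x" using z(1) gs by blast
    then have "Q \<noteq> orb sg x" using z(2) orb_self[of z sg] by metis
    moreover have "Q \<in> orb sg ` Ob" using z seg_Ob by blast
    ultimately show "Q \<in> orb sg ` Ob - {orb sg x}" by blast
  qed
  have xin: "orb sg x \<in> orb sg ` Ob" using xO by blast
  have ps: "orb sg ` seg x \<subset> orb sg ` Ob"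
  proof (rule psubsetI)
    show "orb sg ` seg x \<subseteq> orb sg ` Ob" using sub by blast
    show "orb sg ` seg x \<noteq> orb sg ` Ob"
    proof
      assume eq: "orb sg ` seg x = orb sg ` Ob"
      have "orb sg x \<in> orb sg ` seg x" using xin eq by simp
      then show False using sub by blast
    qed
  qed
  have "finite (orb sg ` Ob)" using finOb by blast
  from psubset_card_mono[OF this ps] show ?thesis unfolding kk_def .
qed

lemma seg_mono:
  assumes x1: "x1 \<in> Ob" and x2: "x2 \<in> Ob" and lt: "pos x1 < pos x2"
  shows "insert x2 (seg x2) \<subseteq> seg x1"
proof -
  have "pos x1 < pos x2 \<and> pos x2 \<le> m \<and> x2 = (ph^^(pos x2)) rho" using pos_props[OF x2] lt by simp
  then have "x2 \<in> seg x1" unfolding seg_def by blast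
  moreover have "seg x2 \<subseteq> seg x1"
  proof
    fix z assume "z \<in> seg x2"
    then obtain t where "z = (ph^^t) rho" "pos x2 < t" "t \<le> m" unfolding seg_def by blast
    then show "z \<in> seg x1" using lt unfolding seg_def by (intro CollectI exI[of _ t]) simp
  qed
  ultimately show ?thesis by auto
qed

lemma val_strict:
  assumes x1: "x1 \<in> goodX" and x2: "x2 \<in> goodX" and lt: "pos x1 < pos x2"
  shows "card (orb sg ` seg x2) < card (orb sg ` seg x1)"
proof -
  have o1: "x1 \<in> Ob" and o2: "x2 \<in> Ob" and g2: "seg x2 \<inter> orb sg x2 = {}"
    using x1 x2 by (auto simp: goodX_def)
  have s: "insert x2 (seg x2) \<subseteq> seg x1" using seg_mono[OF o1 o2 lt] .
  have "orb sg x2 \<notin> orb sg ` seg x2" using g2 orb_self by (metis disjoint_iff imageE)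
  then have "orb sg ` seg x2 \<subset> orb sg ` seg x1" using s by auto
  moreover have "finite (orb sg ` seg x1)" using finOb seg_Ob finite_subset by blast
  ultimately show ?thesis by (simp add: psubset_card_mono)
qed

lemma pos_inj: "x1 \<in> Ob \<Longrightarrow> x2 \<in> Ob \<Longrightarrow> pos x1 = pos x2 \<Longrightarrow> x1 = x2"
  using pos_props(3) by metis

lemma val_inj: "inj_on val G"
proof (rule inj_onI)
  fix y1 y2 assume y: "y1 \<in> G" "y2 \<in> G" "val y1 = val y2"
  show "y1 = y2"
  proof (cases y1)
    case None
    show ?thesis
    proof (cases y2)
      case (Some x2)
      have "x2 \<in> goodX" using y(2) Some by (auto simp: G_def)
      then show ?thesis using y(3) val_lt[of x2] Some None by (simp add: val_def)
    qed (use None in simp)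
  next
    case (Some x1)
    show ?thesis
    proof (cases y2)
      case None
      have "x1 \<in> goodX" using y(1) \<open>y1 = Some x1\<close> by (auto simp: G_def)
      then show ?thesis using y val_lt[of x1] Some None by (simp add: val_def)
    next
      case (Some x2)
      have g: "x1 \<in> goodX" "x2 \<in> goodX" using y \<open>y1 = Some x1\<close> Some by (auto simp: G_def)
      have v: "card (orb sg ` seg x1) = card (orb sg ` seg x2)" using y \<open>y1 = Some x1\<close> Some by (simp add: val_def)
      have "pos x1 = pos x2"
        using val_strict[OF g(1) g(2)] val_strict[OF g(2) g(1)] v by (metis less_irrefl linorder_neqE_nat)
      then show ?thesis using pos_inj g goodX_Ob \<open>y1 = Some x1\<close> Some by auto
    qed
  qed
qed

lemma card_goodX: "card goodX = kk"
proof -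
  have "bij_betw (orb sg) goodX (orb sg ` Ob)"
  proof (rule bij_betw_imageI)
    show "inj_on (orb sg) goodX"
    proof (rule inj_onI)
      fix x1 x2 assume x: "x1 \<in> goodX" "x2 \<in> goodX" "orb sg x1 = orb sg x2"
      have o: "x1 \<in> Ob" "x2 \<in> Ob" using x goodX_Ob by auto
      show "x1 = x2"
      proof (rule ccontr)
        assume ne: "x1 \<noteq> x2"
        then have "pos x1 \<noteq> pos x2" using pos_inj o by auto
        then consider "pos x1 < pos x2" | "pos x2 < pos x1" by linarith
        then show False
        proof cases
          case 1
          then have "x2 \<in> seg x1" using seg_mono[OF o 1] by auto
          then show False using x by (auto simp: goodX_def)
        next
          case 2
          then have "x1 \<in> seg x2" using seg_mono[OF o(2,1) 2] by auto
          then show False using x by (auto simp: goodX_def)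
        qed
      qed
    qed
    show "orb sg ` goodX = orb sg ` Ob"
    proof
      show "orb sg ` goodX \<subseteq> orb sg ` Ob" using goodX_Ob by auto
      show "orb sg ` Ob \<subseteq> orb sg ` goodX"
      proof
        fix Q assume "Q \<in> orb sg ` Ob"
        then obtain y where yO: "y \<in> Ob" and Q: "Q = orb sg y" by auto
        define T where "T = {t. 0 < t \<and> t \<le> m \<and> (ph^^t) rho \<in> Q}"
        have "pos y \<in> T" using pos_props[OF yO] Q by (simp add: T_def)
        moreover have "finite T" by (simp add: T_def)
        ultimately have t0: "Max T \<in> T" "\<And>t. t \<in> T \<Longrightarrow> t \<le> Max T" using Max_in by auto
        define x where "x = (ph^^(Max T)) rho"
        have xO: "x \<in> Ob" by (simp add: x_def Ob_def)
        have xQ: "x \<in> Q" using t0 by (simp add: T_def x_def)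
        have yD: "y \<in> D" using yO Ob_sub by auto
        have ox: "orb sg x = Q" using orb_eq[OF fin bs yD, of x] xQ Q by simp
        have px: "pos x = Max T" using pos_W t0(1) by (simp add: T_def x_def)
        have "seg x \<inter> orb sg x = {}"
        proof (rule ccontr)
          assume "seg x \<inter> orb sg x \<noteq> {}"
          then obtain t where t: "pos x < t" "t \<le> m" "(ph^^t) rho \<in> Q" using ox by (auto simp: seg_def)
          then have "t \<in> T" using px by (simp add: T_def)
          then show False using t0(2) t(1) px by force
        qed
        then have "x \<in> goodX" using xO by (simp add: goodX_def)
        then show "Q \<in> orb sg ` goodX" using ox by auto
      qed
    qed
  qed
  then show ?thesis by (simp add: bij_betw_same_card kk_def)
qed

lemma card_G: "card G = kk + 1"
proof -
  have "None \<notin> Some ` goodX" by auto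
  moreover have "card (Some ` goodX) = kk" using card_goodX by (simp add: card_image)
  ultimately show ?thesis using fin_goodX by (simp add: G_def)
qed

lemma val_G: "val ` G = {..kk}"
proof -
  have sub: "val ` G \<subseteq> {..kk}" using val_lt by (auto simp: G_def val_def less_imp_le)
  have "card (val ` G) = kk + 1" using card_G val_inj by (simp add: card_image)
  then show ?thesis using card_subset_eq[OF _ sub] by simp
qed

lemma good_facts:
  assumes "y \<in> G"
  shows "one_corner (mkU M y)" "darts (mkU M y) \<noteq> {}" "map_iso (Pi (mkU M y)) M"
    "nedges (mkU M y) = nedges M + 1" "outvU (mkU M y) = val y"
proof -
  show "darts (mkU M y) \<noteq> {}" by (simp add: U_darts DU_def)
  show "nedges (mkU M y) = nedges M + 1" by (rule nedgesU)
  have "one_corner (mkU M y) \<and> map_iso (Pi (mkU M y)) M \<and> outvU (mkU M y) = val y"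
  proof (cases y)
    case None then show ?thesis using case_None by (simp add: outvU_def val_def)
  next
    case (Some x)
    then have xg: "x \<in> goodX" using assms by (auto simp: G_def)
    show ?thesis
    proof (cases "x = rho")
      case True then show ?thesis using case_rho Some by (simp add: outvU_def val_def seg_rho)
    next
      case False then show ?thesis using case_good[OF xg False] Some by (simp add: outvU_def val_def)
    qed
  qed
  then show "one_corner (mkU M y)" "map_iso (Pi (mkU M y)) M" "outvU (mkU M y) = val y" by auto
qed

end

lemma iso_orbs:
  assumes g: "bij_betw g (darts A) (darts B)"
    and c: "\<forall>x\<in>darts A. g (alpha A x) = alpha B (g x) \<and> g (sigma A x) = sigma B (g x)"
    and al: "\<forall>x\<in>darts A. alpha A x \<in> darts A" and bs: "bij_betw (sigma A) (darts A) (darts A)"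
    and x: "x \<in> darts A"
  shows "g ` orb (sigma A) x = orb (sigma B) (g x)" "g ` orb (phi A) x = orb (phi B) (g x)"
    "orb (sigma A) x \<subseteq> darts A" "orb (phi A) x \<subseteq> darts A"
proof -
  have sA: "\<forall>z\<in>darts A. sigma A z \<in> darts A" using bs bij_betw_apply by metis
  show "g ` orb (sigma A) x = orb (sigma B) (g x)" using iso_orb[OF sA _ x] c by auto
  have pA: "\<forall>z\<in>darts A. phi A z \<in> darts A" using sA al by (simp add: phi_def)
  have "\<forall>z\<in>darts A. g (phi A z) = phi B (g z)" using c sA by (simp add: phi_def)
  then show "g ` orb (phi A) x = orb (phi B) (g x)" using iso_orb[OF pA _ x] by auto
  show "orb (sigma A) x \<subseteq> darts A" using orb_closed[of x "darts A" "sigma A"] x sA by blast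
  show "orb (phi A) x \<subseteq> darts A" using orb_closed[of x "darts A" "phi A"] x pA by blast
qed

lemma iso_outv:
  assumes iso: "map_iso A B" and r: "rooted_planar_map A" and ne: "darts A \<noteq> {}"
  shows "outv A = outv B"
proof -
  obtain g where g: "bij_betw g (darts A) (darts B)"
    and c: "\<forall>x\<in>darts A. g (alpha A x) = alpha B (g x) \<and> g (sigma A x) = sigma B (g x)"
    and gr: "g (root A) = root B" using iso ne unfolding map_iso_def by auto
  have al: "\<forall>x\<in>darts A. alpha A x \<in> darts A" and bs: "bij_betw (sigma A) (darts A) (darts A)"
    and rA: "root A \<in> darts A" using r ne unfolding rooted_planar_map_def by auto
  have "g ` darts A = darts B" using g by (simp add: bij_betw_def)
  then have neB: "darts B \<noteq> {}" using ne by auto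
  note io = iso_orbs[OF g c al bs]
  have OA: "outer_face A \<subseteq> darts A" using io(4)[OF rA] by (simp add: outer_face_def)
  have OB: "outer_face B = g ` outer_face A" using io(2)[OF rA] gr by (simp add: outer_face_def)
  have "orb (sigma B) ` outer_face B = (image g) ` (orb (sigma A) ` outer_face A)"
  proof -
    have "orb (sigma B) ` outer_face B = (\<lambda>z. orb (sigma B) (g z)) ` outer_face A"
      using OB by (simp add: image_image)
    also have "\<dots> = (\<lambda>z. g ` orb (sigma A) z) ` outer_face A"
      using OA io(1) by (intro image_cong) auto
    finally show ?thesis by (simp add: image_image)
  qed
  moreover have "inj_on (image g) (orb (sigma A) ` outer_face A)"
  proof (rule inj_on_image)
    have "\<Union> (orb (sigma A) ` outer_face A) \<subseteq> darts A" using io(3) OA by blast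
    moreover have "inj_on g (darts A)" using g by (simp add: bij_betw_def)
    ultimately show "inj_on g (\<Union> (orb (sigma A) ` outer_face A))" using inj_on_subset by metis
  qed
  ultimately have "card (orb (sigma B) ` outer_face B) = card (orb (sigma A) ` outer_face A)"
    by (simp add: card_image)
  then show ?thesis using ne neB by (simp add: outv_def)
qed

lemma iso_oc:
  assumes iso: "map_iso A B" and r: "rooted_planar_map A" and ne: "darts A \<noteq> {}"
    and oc: "orb (sigma A) (root A) \<inter> orb (phi A) (root A) = {root A}"
  shows "orb (sigma B) (root B) \<inter> orb (phi B) (root B) = {root B}"
proof -
  obtain g where g: "bij_betw g (darts A) (darts B)"
    and c: "\<forall>x\<in>darts A. g (alpha A x) = alpha B (g x) \<and> g (sigma A x) = sigma B (g x)"
    and gr: "g (root A) = root B" using iso ne unfolding map_iso_def by auto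
  have al: "\<forall>x\<in>darts A. alpha A x \<in> darts A" and bs: "bij_betw (sigma A) (darts A) (darts A)"
    and rA: "root A \<in> darts A" using r ne unfolding rooted_planar_map_def by auto
  note io = iso_orbs[OF g c al bs rA]
  have "g ` (orb (sigma A) (root A) \<inter> orb (phi A) (root A)) = g ` orb (sigma A) (root A) \<inter> g ` orb (phi A) (root A)"
  proof -
    have "inj_on g (darts A)" using g by (simp add: bij_betw_def)
    from inj_on_image_Int[OF this io(3) io(4)] show ?thesis .
  qed
  then show ?thesis using io(1,2) oc gr by simp
qed


lemma Rel_closed_set:
  assumes "\<forall>x\<in>T. alpha V x \<in> T \<and> sigma V x \<in> T" "u \<in> T" "(u, v) \<in> (Rel V)\<^sup>*"
  shows "v \<in> T"
  using assms(3,2)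
proof (induction rule: rtrancl_induct)
  case (step y z)
  then show ?case using assms(1) unfolding Rel_def by auto
qed simp

context nm
begin

lemma sNone: "sigma (mkU M None) rho = na" "sigma (mkU M None) na = sg rho"
  "sigma (mkU M None) nb = nb" "\<forall>z\<in>D-{rho}. sigma (mkU M None) z = sg z"
proof -
  have rn: "rho \<noteq> nb" using rD nbD by auto
  show "sigma (mkU M None) rho = na" using rn by (simp add: U_sigma_None s1_rho)
  show "sigma (mkU M None) na = sg rho" using nab by (simp add: U_sigma_None s1_na)
  show "sigma (mkU M None) nb = nb" by (simp add: U_sigma_None)
  show "\<forall>z\<in>D-{rho}. sigma (mkU M None) z = sg z" using nbD naD s1_z by (auto simp: U_sigma_None)
qed

lemma sRho: "sigma (mkU M (Some rho)) rho = nb" "sigma (mkU M (Some rho)) nb = na"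
  "sigma (mkU M (Some rho)) na = sg rho" "\<forall>z\<in>D-{rho}. sigma (mkU M (Some rho)) z = sg z"
proof -
  have rn: "rho \<noteq> nb" "rho \<noteq> na" using rD nbD naD by auto
  show "sigma (mkU M (Some rho)) rho = nb" by (simp add: U_sigma_Some ins_def)
  show "sigma (mkU M (Some rho)) nb = na" using rn by (simp add: U_sigma_Some ins_def s1_rho)
  show "sigma (mkU M (Some rho)) na = sg rho" using rn nab by (simp add: U_sigma_Some ins_def s1_na)
  show "\<forall>z\<in>D-{rho}. sigma (mkU M (Some rho)) z = sg z" using nbD naD s1_z by (auto simp: U_sigma_Some ins_def)
qed

lemma sNa: "sigma (mkU M (Some na)) rho = na" "sigma (mkU M (Some na)) na = nb"
  "sigma (mkU M (Some na)) nb = sg rho" "\<forall>z\<in>D-{rho}. sigma (mkU M (Some na)) z = sg z"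
proof -
  have rn: "rho \<noteq> nb" "rho \<noteq> na" using rD nbD naD by auto
  show "sigma (mkU M (Some na)) rho = na" using rn by (simp add: U_sigma_Some ins_def s1_rho)
  show "sigma (mkU M (Some na)) na = nb" by (simp add: U_sigma_Some ins_def)
  show "sigma (mkU M (Some na)) nb = sg rho" using nab by (simp add: U_sigma_Some ins_def s1_na)
  show "\<forall>z\<in>D-{rho}. sigma (mkU M (Some na)) z = sg z" using nbD naD s1_z by (auto simp: U_sigma_Some ins_def)
qed

lemma V_iso:
  assumes oc: "one_corner V" and dV: "darts V \<noteq> {}" and iso: "map_iso (Pi V) M"
  shows "\<exists>y\<in>Y. map_iso V (mkU M y)"
proof -
  define DV where "DV = darts V"
  define aV where "aV = alpha V"
  define sV where "sV = sigma V"
  define r where "r = root V"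
  define r' where "r' = aV r"
  define D' where "D' = DV - {r, r'}"
  have rpV: "rooted_planar_map V" using oc by (simp add: one_corner_def)
  have finV: "finite DV" and alV: "\<forall>x\<in>DV. aV x \<in> DV \<and> aV x \<noteq> x \<and> aV (aV x) = x"
    and bsV: "bij_betw sV DV DV" and rV: "r \<in> DV" and connV: "connected_map V"
    using rpV dV unfolding rooted_planar_map_def DV_def aV_def sV_def r_def by auto
  have ocV: "orb sV r \<inter> orb (phi V) r = {r}"
    using oc dV unfolding one_corner_def outer_face_def sV_def r_def by auto
  have r'D: "r' \<in> DV" and rr': "r \<noteq> r'" and ar': "aV r' = r"
    using alV rV unfolding r'_def by auto
  have sVD: "sV z \<in> DV" if "z \<in> DV" for z using bsV that bij_betw_apply by metis
  have sVinj: "z1 = z2" if "z1 \<in> DV" "z2 \<in> DV" "sV z1 = sV z2" for z1 z2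
    using bsV that by (metis bij_betw_def inj_onD)
  have dPi: "darts (Pi V) = D'" by (simp add: Pi_def Let_def D'_def DV_def r'_def aV_def r_def)
  have aPi: "alpha (Pi V) = aV" by (simp add: Pi_def Let_def aV_def)
  have sPi: "sigma (Pi V) = skip_next V" by (simp add: Pi_def Let_def)
  obtain f where fb: "bij_betw f D' D"
    and fc: "\<forall>z\<in>D'. f (aV z) = al (f z) \<and> f (skip_next V z) = sg (f z)"
    and fr0: "D' \<noteq> {} \<longrightarrow> f (root (Pi V)) = rho"
    using iso unfolding map_iso_def dPi aPi sPi by blast
  have "f ` D' = D" using fb by (simp add: bij_betw_def)
  then have D'ne: "D' \<noteq> {}" using ne by auto
  have rPi: "root (Pi V) = (THE d. d \<in> D' \<and> skip_next V d = skip_next V r')"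
    using D'ne by (simp add: Pi_def Let_def D'_def DV_def r'_def aV_def r_def)
  have fr: "f (root (Pi V)) = rho" using fr0 D'ne by simp
  have fD: "f z \<in> D" if "z \<in> D'" for z using fb that bij_betw_apply by metis
  have finj: "z1 = z2" if "z1 \<in> D'" "z2 \<in> D'" "f z1 = f z2" for z1 z2
    using fb that by (metis bij_betw_def inj_onD)
  have sginj: "z1 = z2" if "z1 \<in> D" "z2 \<in> D" "sg z1 = sg z2" for z1 z2
    using bs that by (metis bij_betw_def inj_onD)
  have del: "{root V, alpha V (root V)} = {r, r'}" by (simp add: r_def r'_def aV_def)
  have skV1: "skip_next V z = sV z" if "sV z \<notin> {r, r'}" for z
    using skip1[of V z] that del by (simp add: sV_def)
  have skV2: "skip_next V z = sV (sV z)" if "sV z \<in> {r, r'}" "sV (sV z) \<notin> {r, r'}" for z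
    using skip2[of V z] that del by (simp add: sV_def)
  have skV3: "skip_next V z = sV (sV (sV z))"
    if "sV z \<in> {r, r'}" "sV (sV z) \<in> {r, r'}" "sV (sV (sV z)) \<notin> {r, r'}" for z
    using skip3[of V z] that del by (simp add: sV_def)
  have rootPi: "root (Pi V) = d0" if "d0 \<in> D'" "skip_next V d0 = skip_next V r'" for d0
  proof -
    have "(THE d. d \<in> D' \<and> skip_next V d = skip_next V r') = d0"
    proof (rule the_equality)
      show "d0 \<in> D' \<and> skip_next V d0 = skip_next V r'" using that by simp
      fix d assume d: "d \<in> D' \<and> skip_next V d = skip_next V r'"
      then have "sg (f d) = sg (f d0)" using fc that by metis
      then have "f d = f d0" using sginj fD d that by blast
      then show "d = d0" using finj d that by blast
    qed
    then show ?thesis using rPi by simp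
  qed
  have closed_contra: False if "sV r \<in> {r, r'}" "sV r' \<in> {r, r'}"
  proof -
    have cl: "\<forall>x\<in>{r, r'}. alpha V x \<in> {r, r'} \<and> sigma V x \<in> {r, r'}"
      using that ar' by (auto simp: sV_def aV_def r'_def)
    have "\<forall>v\<in>DV. v \<in> {r, r'}"
    proof
      fix v assume "v \<in> DV"
      then have "(r, v) \<in> (Rel V)\<^sup>*" using connV rV unfolding connected_map_Rel DV_def by auto
      then show "v \<in> {r, r'}" using Rel_closed_set[OF cl, of r v] by simp
    qed
    then have "D' = {}" by (auto simp: D'_def)
    then show False using D'ne by simp
  qed
  have bphV: "bij_betw (phi V) DV DV"
  proof -
    have "inj_on aV DV" using alV by (metis inj_onI)
    moreover have "aV ` DV = DV" using alV by (auto simp: image_iff) metis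
    ultimately have "bij_betw aV DV DV" by (simp add: bij_betw_def)
    then show ?thesis using bij_betw_trans[OF bsV] by (simp add: phi_def aV_def sV_def)
  qed
  obtain c where c: "c \<in> DV" "sV c = r" using bsV rV by (metis bij_betw_imp_surj_on imageE)
  obtain e where e: "e \<in> DV" "sV e = r'" using bsV r'D by (metis bij_betw_imp_surj_on imageE)
  have r'nf: "sV r' \<noteq> r'"
  proof
    assume fx: "sV r' = r'"
    have p1: "phi V r' = r" using fx ar' by (simp add: phi_def aV_def sV_def)
    have p2: "phi V c = r'" using c by (simp add: phi_def aV_def sV_def r'_def)
    have "r = (phi V ^^ 2) c" using p1 p2 by (simp add: numeral_2_eq_2)
    then have "r \<in> orb (phi V) c" by (metis orb_funpow)
    then have A: "c \<in> orb (phi V) r" using orb_sym[OF finV bphV c(1)] by simp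
    have "r \<in> orb sV c" using c(2) orb_f_self[of sV c] by simp
    then have B: "c \<in> orb sV r" using orb_sym[OF finV bsV c(1)] by simp
    have "c = r" using A B ocV by blast
    then have "sV r = r" using c by simp
    then show False using closed_contra fx by simp
  qed
  have aVD': "aV z \<in> D'" if "z \<in> D'" for z
  proof -
    have zD: "z \<in> DV" "z \<noteq> r" "z \<noteq> r'" using that by (auto simp: D'_def)
    have "aV z \<noteq> r" using zD alV r'_def by metis
    moreover have "aV z \<noteq> r'" using zD alV rV r'_def by metis
    ultimately show ?thesis using alV zD by (auto simp: D'_def)
  qed
  define g where "g = (\<lambda>z. if z = r then nb else if z = r' then na else f z)"
  have gD': "g z = f z" if "z \<in> D'" for z using that by (auto simp: g_def D'_def)
  have gr: "g r = nb" by (simp add: g_def)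
  have gr': "g r' = na" using rr' by (simp add: g_def)
  have DVeq: "DV = insert r (insert r' D')" using rV r'D by (auto simp: D'_def)
  have g_bij: "bij_betw g DV DU"
  proof -
    have "g ` D' = D" using gD' \<open>f ` D' = D\<close> by (metis image_cong)
    then have im: "g ` DV = DU" using DVeq gr gr' by (simp add: DU_def)
    have "inj_on g DV"
    proof (rule inj_onI)
      fix z1 z2 assume z: "z1 \<in> DV" "z2 \<in> DV" "g z1 = g z2"
      have nd: "f z \<noteq> na" "f z \<noteq> nb" if "z \<in> D'" for z using fD[OF that] naD nbD by auto
      show "z1 = z2"
      proof (cases "z1 \<in> D'")
        case True
        show ?thesis
        proof (cases "z2 \<in> D'")
          case True then show ?thesis using z \<open>z1 \<in> D'\<close> gD' finj by metis
        next
          case False then have "z2 = r \<or> z2 = r'" using z by (auto simp: D'_def)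
          moreover have "g z1 \<noteq> na" "g z1 \<noteq> nb" using gD'[OF \<open>z1 \<in> D'\<close>] nd[OF \<open>z1 \<in> D'\<close>] by auto
          ultimately show ?thesis using z gr gr' by auto
        qed
      next
        case False
        then have z1: "z1 = r \<or> z1 = r'" using z by (auto simp: D'_def)
        show ?thesis
        proof (cases "z2 \<in> D'")
          case True
          have "g z2 \<noteq> na" "g z2 \<noteq> nb" using gD'[OF True] nd[OF True] by auto
          then show ?thesis using z z1 gr gr' by auto
        next
          case False then have "z2 = r \<or> z2 = r'" using z by (auto simp: D'_def)
          then show ?thesis using z z1 gr gr' nab by auto
        qed
      qed
    qed
    then show ?thesis using im by (simp add: bij_betw_def)
  qed
  have g_alpha: "\<forall>z\<in>DV. g (aV z) = al' (g z)"
  proof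
    fix z assume z: "z \<in> DV"
    show "g (aV z) = al' (g z)"
    proof (cases "z \<in> D'")
      case True
      then show ?thesis using gD' aVD' fc al'_z fD by simp
    next
      case False
      then have "z = r \<or> z = r'" using z by (auto simp: D'_def)
      then show ?thesis using gr gr' ar' al'_na al'_nb by (auto simp: r'_def)
    qed
  qed
  have conclude: "map_iso V (mkU M y)"
    if "\<forall>z\<in>DV. g (sV z) = sigma (mkU M y) (g z)" for y
    unfolding map_iso_def
    using g_bij g_alpha that gr
    by (intro exI[of _ g]) (simp add: U_darts U_alpha U_root DV_def aV_def sV_def r_def)
  have generic: "g (sV z) = sg (f z)" if "z \<in> D'" "sV z \<in> D'" for z
  proof -
    have "sV z \<notin> {r, r'}" using that by (auto simp: D'_def)
    then have "skip_next V z = sV z" using skV1 by simp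
    then show ?thesis using fc that gD' by metis
  qed
  have zD'D: "z \<in> DV" if "z \<in> D'" for z using that by (auto simp: D'_def)
  consider "c = r" | "c = r'" | "c \<in> D'" using c by (auto simp: D'_def)
  then show ?thesis
  proof cases
    case 1
    then have sr: "sV r = r" using c by simp
    have eD': "e \<in> D'" using e sr rr' r'nf by (auto simp: D'_def)
    define w where "w = sV r'"
    have wD': "w \<in> D'"
    proof -
      have "w \<noteq> r'" using r'nf w_def by simp
      moreover have "w \<noteq> r" using sr sVinj[OF r'D rV] rr' w_def by auto
      ultimately show ?thesis using sVD[OF r'D] by (auto simp: D'_def w_def)
    qed
    have wn: "w \<notin> {r, r'}" using wD' by (auto simp: D'_def)
    have ske: "skip_next V e = w" using skV2[of e] e wn by (simp add: w_def)
    have skr: "skip_next V r' = w" using skV1[of r'] wn by (simp add: w_def)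
    have fe: "f e = rho" using rootPi[OF eD'] ske skr fr by simp
    have fw: "f w = sg rho" using fc eD' ske fe by metis
    let ?y = "None :: nat option"
    have "\<forall>z\<in>DV. g (sV z) = sigma (mkU M ?y) (g z)"
    proof
      fix z assume z: "z \<in> DV"
      consider "z = r" | "z = r'" | "z = e" | "z \<in> D'" "z \<noteq> e" using z by (auto simp: D'_def)
      then show "g (sV z) = sigma (mkU M ?y) (g z)"
      proof cases
        case 1 then show ?thesis using sr gr sNone(3) by simp
      next
        case 2 then show ?thesis using gD'[OF wD'] fw gr' sNone(2) by (simp add: w_def)
      next
        case 3 then show ?thesis using e gr' gD'[OF eD'] fe sNone(1) by simp
      next
        case 4
        have "sV z \<noteq> r" using sr sVinj[OF zD'D[OF 4(1)] rV] 4(1) by (auto simp: D'_def)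
        moreover have "sV z \<noteq> r'" using e sVinj[OF zD'D[OF 4(1)] e(1)] 4 by auto
        ultimately have sz: "sV z \<in> D'" using sVD[OF z] by (auto simp: D'_def)
        have "f z \<noteq> rho" using fe finj[OF 4(1) eD'] 4(2) by auto
        then have "sigma (mkU M ?y) (f z) = sg (f z)" using sNone(4) fD[OF 4(1)] by auto
        then show ?thesis using generic[OF 4(1) sz] gD'[OF 4(1)] by simp
      qed
    qed
    moreover have "?y \<in> Y" by (simp add: Y_def)
    ultimately show ?thesis using conclude by blast
  next
    case 2
    then have sr': "sV r' = r" using c by simp
    have eD': "e \<in> D'"
    proof -
      have "e \<noteq> r'" using e sr' rr' by auto
      moreover have "e \<noteq> r" using closed_contra e sr' by auto
      ultimately show ?thesis using e by (auto simp: D'_def)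
    qed
    define w where "w = sV r"
    have wD': "w \<in> D'"
    proof -
      have "w \<noteq> r" using sr' sVinj[OF rV r'D] rr' w_def by auto
      moreover have "w \<noteq> r'" using e sVinj[OF rV e(1)] eD' w_def by (auto simp: D'_def)
      ultimately show ?thesis using sVD[OF rV] by (auto simp: D'_def w_def)
    qed
    have wn: "w \<notin> {r, r'}" using wD' by (auto simp: D'_def)
    have ske: "skip_next V e = w" using skV3[of e] e sr' wn by (simp add: w_def)
    have skr: "skip_next V r' = w" using skV2[of r'] sr' wn by (simp add: w_def)
    have fe: "f e = rho" using rootPi[OF eD'] ske skr fr by simp
    have fw: "f w = sg rho" using fc eD' ske fe by metis
    let ?y = "Some na"
    have "\<forall>z\<in>DV. g (sV z) = sigma (mkU M ?y) (g z)"
    proof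
      fix z assume z: "z \<in> DV"
      consider "z = r" | "z = r'" | "z = e" | "z \<in> D'" "z \<noteq> e" using z by (auto simp: D'_def)
      then show "g (sV z) = sigma (mkU M ?y) (g z)"
      proof cases
        case 1 then show ?thesis using gD'[OF wD'] fw gr sNa(3) by (simp add: w_def)
      next
        case 2 then show ?thesis using sr' gr gr' sNa(2) by simp
      next
        case 3 then show ?thesis using e gr' gD'[OF eD'] fe sNa(1) by simp
      next
        case 4
        have "sV z \<noteq> r" using c 2 sVinj[OF zD'D[OF 4(1)] r'D] 4(1) by (auto simp: D'_def)
        moreover have "sV z \<noteq> r'" using e sVinj[OF zD'D[OF 4(1)] e(1)] 4 by auto
        ultimately have sz: "sV z \<in> D'" using sVD[OF z] by (auto simp: D'_def)
        have "f z \<noteq> rho" using fe finj[OF 4(1) eD'] 4(2) by auto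
        then have "sigma (mkU M ?y) (f z) = sg (f z)" using sNa(4) fD[OF 4(1)] by auto
        then show ?thesis using generic[OF 4(1) sz] gD'[OF 4(1)] by simp
      qed
    qed
    moreover have "?y \<in> Y" by (simp add: Y_def)
    ultimately show ?thesis using conclude by blast
  next
    case 3
    note cD' = 3
    show ?thesis
    proof (cases "e = r")
      case True
      then have sr: "sV r = r'" using e by simp
      define w where "w = sV r'"
      have wD': "w \<in> D'"
      proof -
        have "w \<noteq> r'" using r'nf w_def by simp
        moreover have "w \<noteq> r" using closed_contra sr w_def by auto
        ultimately show ?thesis using sVD[OF r'D] by (auto simp: D'_def w_def)
      qed
      have wn: "w \<notin> {r, r'}" using wD' by (auto simp: D'_def)
      have skc: "skip_next V c = w" using skV3[of c] c sr wn by (simp add: w_def)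
      have skr: "skip_next V r' = w" using skV1[of r'] wn by (simp add: w_def)
      have fcr: "f c = rho" using rootPi[OF cD'] skc skr fr by simp
      have fw: "f w = sg rho" using fc cD' skc fcr by metis
      let ?y = "Some rho"
      have "\<forall>z\<in>DV. g (sV z) = sigma (mkU M ?y) (g z)"
      proof
        fix z assume z: "z \<in> DV"
        consider "z = r" | "z = r'" | "z = c" | "z \<in> D'" "z \<noteq> c" using z by (auto simp: D'_def)
        then show "g (sV z) = sigma (mkU M ?y) (g z)"
        proof cases
          case 1 then show ?thesis using sr gr gr' sRho(2) by simp
        next
          case 2 then show ?thesis using gD'[OF wD'] fw gr' sRho(3) by (simp add: w_def)
        next
          case 3 then show ?thesis using c gr gD'[OF cD'] fcr sRho(1) by simp
        next
          case 4
          have "sV z \<noteq> r" using c sVinj[OF zD'D[OF 4(1)] c(1)] 4 by auto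
          moreover have "sV z \<noteq> r'" using sr sVinj[OF zD'D[OF 4(1)] rV] 4(1) by (auto simp: D'_def)
          ultimately have sz: "sV z \<in> D'" using sVD[OF z] by (auto simp: D'_def)
          have "f z \<noteq> rho" using fcr finj[OF 4(1) cD'] 4(2) by auto
          then have "sigma (mkU M ?y) (f z) = sg (f z)" using sRho(4) fD[OF 4(1)] by auto
          then show ?thesis using generic[OF 4(1) sz] gD'[OF 4(1)] by simp
        qed
      qed
      moreover have "?y \<in> Y" using rD by (simp add: Y_def)
      ultimately show ?thesis using conclude by blast
    next
      case False
      have eD': "e \<in> D'" using e False r'nf by (auto simp: D'_def)
      have ce: "c \<noteq> e" using c e rr' by auto
      define u where "u = sV r"
      have uD': "u \<in> D'"
      proof -
        have "u \<noteq> r" using c sVinj[OF rV c(1)] cD' u_def by (auto simp: D'_def)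
        moreover have "u \<noteq> r'" using e sVinj[OF rV e(1)] False u_def by auto
        ultimately show ?thesis using sVD[OF rV] by (auto simp: D'_def u_def)
      qed
      define w where "w = sV r'"
      have wD': "w \<in> D'"
      proof -
        have "w \<noteq> r'" using r'nf w_def by simp
        moreover have "w \<noteq> r" using c sVinj[OF r'D c(1)] cD' w_def by (auto simp: D'_def)
        ultimately show ?thesis using sVD[OF r'D] by (auto simp: D'_def w_def)
      qed
      have un: "u \<notin> {r, r'}" using uD' by (auto simp: D'_def)
      have wn: "w \<notin> {r, r'}" using wD' by (auto simp: D'_def)
      have ske: "skip_next V e = w" using skV2[of e] e wn by (simp add: w_def)
      have skr: "skip_next V r' = w" using skV1[of r'] wn by (simp add: w_def)
      have skc: "skip_next V c = u" using skV2[of c] c un by (simp add: u_def)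
      have fe: "f e = rho" using rootPi[OF eD'] ske skr fr by simp
      have fw: "f w = sg rho" using fc eD' ske fe by metis
      define x where "x = f c"
      have fu: "f u = sg x" using fc cD' skc x_def by metis
      have xD: "x \<in> D" using fD[OF cD'] x_def by simp
      have xr: "x \<noteq> rho" using fe finj[OF cD' eD'] ce x_def by auto
      note sx = sX[OF xD xr]
      let ?y = "Some x"
      have "\<forall>z\<in>DV. g (sV z) = sigma (mkU M ?y) (g z)"
      proof
        fix z assume z: "z \<in> DV"
        consider "z = r" | "z = r'" | "z = c" | "z = e" | "z \<in> D'" "z \<noteq> c" "z \<noteq> e"
          using z by (auto simp: D'_def)
        then show "g (sV z) = sigma (mkU M ?y) (g z)"
        proof cases
          case 1 then show ?thesis using gD'[OF uD'] fu gr sx(2) by (simp add: u_def)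
        next
          case 2 then show ?thesis using gD'[OF wD'] fw gr' sx(4) by (simp add: w_def)
        next
          case 3 then show ?thesis using c gr gD'[OF cD'] sx(1) x_def by simp
        next
          case 4 then show ?thesis using e gr' gD'[OF eD'] fe sx(3) by simp
        next
          case 5
          have "sV z \<noteq> r" using c sVinj[OF zD'D[OF 5(1)] c(1)] 5 by auto
          moreover have "sV z \<noteq> r'" using e sVinj[OF zD'D[OF 5(1)] e(1)] 5 by auto
          ultimately have sz: "sV z \<in> D'" using sVD[OF z] by (auto simp: D'_def)
          have "f z \<noteq> rho" using fe finj[OF 5(1) eD'] 5(3) by auto
          moreover have "f z \<noteq> x" using finj[OF 5(1) cD'] 5(2) x_def by auto
          ultimately have "sigma (mkU M ?y) (f z) = sg (f z)" using sx(5) fD[OF 5(1)] by auto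
          then show ?thesis using generic[OF 5(1) sz] gD'[OF 5(1)] by simp
        qed
      qed
      moreover have "?y \<in> Y" using xD by (simp add: Y_def)
      ultimately show ?thesis using conclude by blast
    qed
  qed
qed

end


context nm
begin

lemma outv_M: "outv M = kk"
  using ne by (simp add: outv_def kk_def outer_face_def Ob_def)

definition "Uf i = mkU M (THE y. y \<in> G \<and> val y = i)"

lemma Uf_sel:
  assumes "i \<le> kk" shows "(THE y. y \<in> G \<and> val y = i) \<in> G \<and> val (THE y. y \<in> G \<and> val y = i) = i"
proof -
  obtain y where y: "y \<in> G" "val y = i" using val_G assms by (metis atMost_iff imageE)
  have "(THE y. y \<in> G \<and> val y = i) = y"
    using y val_inj by (intro the_equality) (auto simp: inj_on_def)
  then show ?thesis using y by simp
qed

lemma main_ne: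
  shows "\<exists>U :: nat \<Rightarrow> dmap.
           (\<forall>i\<le>outv M. one_corner (U i) \<and> darts (U i) \<noteq> {} \<and> map_iso (Pi (U i)) M
                   \<and> nedges (U i) = nedges M + 1 \<and> outvU (U i) = i) \<and>
           (\<forall>i\<le>outv M. \<forall>j\<le>outv M. map_iso (U i) (U j) \<longrightarrow> i = j) \<and>
           (\<forall>V. one_corner V \<and> darts V \<noteq> {} \<and> map_iso (Pi V) M \<longrightarrow>
                 (\<exists>i\<le>outv M. map_iso V (U i)))"
proof (intro exI[of _ Uf] conjI allI impI ballI)
  fix i assume i: "i \<le> outv M"
  then have sel: "(THE y. y \<in> G \<and> val y = i) \<in> G" "val (THE y. y \<in> G \<and> val y = i) = i"
    using Uf_sel outv_M by auto
  note gf = good_facts[OF sel(1)]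
  show "one_corner (Uf i)" "darts (Uf i) \<noteq> {}" "map_iso (Pi (Uf i)) M"
    "nedges (Uf i) = nedges M + 1" "outvU (Uf i) = i"
    using gf sel(2) by (simp_all add: Uf_def)
next
  fix i j assume i: "i \<le> outv M" and j: "j \<le> outv M" and iso: "map_iso (Uf i) (Uf j)"
  have si: "(THE y. y \<in> G \<and> val y = i) \<in> G" "val (THE y. y \<in> G \<and> val y = i) = i"
    using Uf_sel outv_M i by auto
  have sj: "(THE y. y \<in> G \<and> val y = j) \<in> G" "val (THE y. y \<in> G \<and> val y = j) = j"
    using Uf_sel outv_M j by auto
  note gi = good_facts[OF si(1)] and gj = good_facts[OF sj(1)]
  have "rooted_planar_map (Uf i)" using gi(1) by (simp add: Uf_def one_corner_def)
  then have "outv (Uf i) = outv (Uf j)" using iso_outv[OF iso] gi(2) by (simp add: Uf_def)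
  then have "outvU (Uf i) = outvU (Uf j)" by (simp add: outvU_def)
  then show "i = j" using gi(5) gj(5) si(2) sj(2) by (simp add: Uf_def)
next
  fix V assume V: "one_corner V \<and> darts V \<noteq> {} \<and> map_iso (Pi V) M"
  then obtain y where y: "y \<in> Y" and iso: "map_iso V (mkU M y)" using V_iso by blast
  have rpV: "rooted_planar_map V" using V by (simp add: one_corner_def)
  have ocV: "orb (sigma V) (root V) \<inter> orb (phi V) (root V) = {root V}"
    using V by (auto simp: one_corner_def outer_face_def)
  have "orb (sigma (mkU M y)) (root (mkU M y)) \<inter> orb (phi (mkU M y)) (root (mkU M y)) = {root (mkU M y)}"
    using iso_oc[OF iso rpV _ ocV] V by simp
  then have yG: "y \<in> G" using classify[OF y] by (simp add: U_root)
  define i where "i = val y"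
  have ik: "i \<le> outv M" using val_G yG outv_M i_def by auto
  have "(THE y'. y' \<in> G \<and> val y' = i) = y"
    using yG val_inj i_def by (intro the_equality) (auto simp: inj_on_def)
  then have "map_iso V (Uf i)" using iso by (simp add: Uf_def)
  then show "\<exists>i\<le>outv M. map_iso V (Uf i)" using ik by blast
qed

end


definition sw :: "nat \<Rightarrow> nat" where "sw z = (if z = 0 then 1 else if z = 1 then 0 else z)"
definition "Lmap = \<lparr>darts = {0::nat, 1}, alpha = sw, sigma = sw, root = 0\<rparr>"
definition "Emap = \<lparr>darts = {0::nat, 1}, alpha = sw, sigma = id, root = 0\<rparr>"

lemma sw_simps[simp]: "sw 0 = 1" "sw 1 = 0" "sw (sw z) = z" by (auto simp: sw_def)

lemma orb_sw: "x \<in> {0, 1} \<Longrightarrow> orb sw x = {0, 1}"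
proof -
  assume x: "x \<in> {0, 1}"
  have "orb sw x \<subseteq> {0, 1}" by (rule orb_closed) (use x in \<open>auto simp: sw_def\<close>)
  moreover have "sw x \<in> orb sw x" by simp
  moreover have "x \<in> orb sw x" by simp
  moreover have "x = 0 \<or> x = 1" using x by simp
  ultimately show ?thesis by (metis sw_simps(1,2) insert_absorb2 insert_commute subset_antisym
      insert_subset empty_subsetI)
qed

lemma orb_id: "orb id x = {x}" by (rule orb_fixed) simp

lemma sw_bij: "bij_betw sw {0, 1} {0, 1}"
  by (auto simp: bij_betw_def inj_on_def sw_def)

lemma phi_L: "phi Lmap = id" by (auto simp: phi_def Lmap_def)
lemma phi_E: "phi Emap = sw" by (auto simp: phi_def Emap_def)

lemma conn01:
  assumes "alpha N = sw" "darts N = {0,1}" shows "connected_map N"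
  unfolding connected_map_def
proof (intro ballI)
  fix x y assume x: "x \<in> darts N" "y \<in> darts N"
  show "(x, y) \<in> ({(d, alpha N d) | d. d \<in> darts N} \<union> {(d, sigma N d) | d. d \<in> darts N})\<^sup>*"
  proof (cases "x = y")
    case True then show ?thesis by simp
  next
    case False
    then have "y = alpha N x" using x assms by (auto simp: sw_def)
    then have "(x, y) \<in> {(d, alpha N d) | d. d \<in> darts N}" using x by blast
    then show ?thesis by (intro r_into_rtrancl UnI1)
  qed
qed

lemma L_simps: "darts Lmap = {0, 1}" "alpha Lmap = sw" "sigma Lmap = sw" "root Lmap = 0"
  by (simp_all add: Lmap_def)
lemma E_simps: "darts Emap = {0, 1}" "alpha Emap = sw" "sigma Emap = id" "root Emap = 0"
  by (simp_all add: Emap_def)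

lemma rpm_L: "rooted_planar_map Lmap"
proof -
  have a: "orb sw ` {0, 1} = {{0::nat, 1}}" using orb_sw by auto
  have b: "orb id ` {0::nat, 1} = {{0}, {1}}" using orb_id by auto
  have "nvertices Lmap = 1" using a by (simp add: nvertices_def L_simps)
  moreover have "nfaces Lmap = 2" using b by (simp add: nfaces_def L_simps phi_L)
  moreover have "nedges Lmap = 1" by (simp add: nedges_def L_simps)
  ultimately have "nvertices Lmap + nfaces Lmap = nedges Lmap + 2" by simp
  then show ?thesis using sw_bij conn01[of Lmap]
    unfolding rooted_planar_map_def by (simp add: L_simps sw_def)
qed

lemma rpm_E: "rooted_planar_map Emap"
proof -
  have a: "orb sw ` {0, 1} = {{0::nat, 1}}" using orb_sw by auto
  have b: "orb id ` {0::nat, 1} = {{0}, {1}}" using orb_id by auto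
  have "nvertices Emap = 2" using b by (simp add: nvertices_def E_simps)
  moreover have "nfaces Emap = 1" using a by (simp add: nfaces_def E_simps phi_E)
  moreover have "nedges Emap = 1" by (simp add: nedges_def E_simps)
  ultimately have "nvertices Emap + nfaces Emap = nedges Emap + 2" by simp
  moreover have "bij_betw id {0::nat, 1} {0, 1}" by simp
  ultimately show ?thesis using conn01[of Emap]
    unfolding rooted_planar_map_def by (simp add: E_simps sw_def)
qed

lemma oc_L: "one_corner Lmap" and outv_L: "outv Lmap = 1"
proof -
  have "orb (sigma Lmap) (root Lmap) \<inter> outer_face Lmap = {root Lmap}"
    using orb_sw[of 0] by (simp add: outer_face_def phi_L orb_id L_simps)
  then show "one_corner Lmap" using rpm_L by (simp add: one_corner_def)
  show "outv Lmap = 1" by (simp add: outv_def outer_face_def phi_L orb_id L_simps)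
qed

lemma oc_E: "one_corner Emap" and outv_E: "outv Emap = 2"
proof -
  have "orb (sigma Emap) (root Emap) \<inter> outer_face Emap = {root Emap}"
    using orb_sw[of 0] by (simp add: outer_face_def phi_E orb_id E_simps)
  then show "one_corner Emap" using rpm_E by (simp add: one_corner_def)
  have "orb id ` {0::nat, 1} = {{0}, {1}}" using orb_id by auto
  then show "outv Emap = 2" using orb_sw[of 0] by (simp add: outv_def outer_face_def phi_E E_simps)
qed

lemma Pi_empty: "darts N = {0, 1} \<Longrightarrow> root N = 0 \<Longrightarrow> alpha N = sw \<Longrightarrow> darts (Pi N) = {}"
  by (auto simp: Pi_def Let_def)

lemma iso_empty: "darts A = {} \<Longrightarrow> darts B = {} \<Longrightarrow> map_iso A B"
  unfolding map_iso_def by (auto intro: exI[of _ id])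

lemma main_empty:
  assumes e: "darts M = {}"
  shows "\<exists>U :: nat \<Rightarrow> dmap.
           (\<forall>i\<le>outv M. one_corner (U i) \<and> darts (U i) \<noteq> {} \<and> map_iso (Pi (U i)) M
                   \<and> nedges (U i) = nedges M + 1 \<and> outvU (U i) = i) \<and>
           (\<forall>i\<le>outv M. \<forall>j\<le>outv M. map_iso (U i) (U j) \<longrightarrow> i = j) \<and>
           (\<forall>V. one_corner V \<and> darts V \<noteq> {} \<and> map_iso (Pi V) M \<longrightarrow>
                 (\<exists>i\<le>outv M. map_iso V (U i)))"
proof -
  define U where "U = (\<lambda>i::nat. if i = 0 then Lmap else Emap)"
  have k: "outv M = 1" using e by (simp add: outv_def)
  have n: "nedges M = 0" using e by (simp add: nedges_def)
  have P1: "\<forall>i\<le>outv M. one_corner (U i) \<and> darts (U i) \<noteq> {} \<and> map_iso (Pi (U i)) M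
                   \<and> nedges (U i) = nedges M + 1 \<and> outvU (U i) = i"
  proof (intro allI impI)
    fix i assume "i \<le> outv M"
    then have "i = 0 \<or> i = 1" using k by auto
    moreover have "map_iso (Pi Lmap) M" "map_iso (Pi Emap) M"
      using iso_empty Pi_empty e by (auto simp: Lmap_def Emap_def)
    ultimately show "one_corner (U i) \<and> darts (U i) \<noteq> {} \<and> map_iso (Pi (U i)) M
                   \<and> nedges (U i) = nedges M + 1 \<and> outvU (U i) = i"
      using oc_L oc_E outv_L outv_E n
      by (auto simp: U_def outvU_def nedges_def Lmap_def Emap_def)
  qed
  have P2: "\<forall>i\<le>outv M. \<forall>j\<le>outv M. map_iso (U i) (U j) \<longrightarrow> i = j"
  proof (intro allI impI)
    fix i j assume "i \<le> outv M" "j \<le> outv M" and iso: "map_iso (U i) (U j)"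
    then have ij: "i \<le> 1" "j \<le> 1" using k by auto
    have "rooted_planar_map (U i)" "darts (U i) \<noteq> {}" using rpm_L rpm_E by (auto simp: U_def Lmap_def Emap_def)
    then have "outv (U i) = outv (U j)" using iso_outv[OF iso] by simp
    then show "i = j" using ij outv_L outv_E by (auto simp: U_def split: if_splits)
  qed
  have P3: "\<forall>V. one_corner V \<and> darts V \<noteq> {} \<and> map_iso (Pi V) M \<longrightarrow> (\<exists>i\<le>outv M. map_iso V (U i))"
  proof (intro allI impI)
    fix V assume V: "one_corner V \<and> darts V \<noteq> {} \<and> map_iso (Pi V) M"
    define r where "r = root V"
    define r' where "r' = alpha V r"
    have rpV: "rooted_planar_map V" using V by (simp add: one_corner_def)
    have rV: "r \<in> darts V" using rpV V by (simp add: rooted_planar_map_def r_def)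
    have alV: "\<forall>x\<in>darts V. alpha V x \<in> darts V \<and> alpha V x \<noteq> x \<and> alpha V (alpha V x) = x"
      and bsV: "bij_betw (sigma V) (darts V) (darts V)" using rpV by (auto simp: rooted_planar_map_def)
    have r'V: "r' \<in> darts V" and rr': "r \<noteq> r'" and ar': "alpha V r' = r" using alV rV by (auto simp: r'_def)
    obtain f where "bij_betw f (darts (Pi V)) (darts M)" using V by (auto simp: map_iso_def)
    then have "darts (Pi V) = {}" using e by (simp add: bij_betw_def)
    then have dV: "darts V = {r, r'}" using rV r'V by (auto simp: Pi_def Let_def r_def r'_def)
    define g where "g = (\<lambda>z. if z = r then (0::nat) else 1)"
    have gb: "bij_betw g (darts V) {0, 1}" using dV rr' by (auto simp: bij_betw_def inj_on_def g_def)
    have ga: "\<forall>x\<in>darts V. g (alpha V x) = sw (g x)" using dV rr' ar' by (auto simp: g_def r'_def sw_def)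
    have sr: "sigma V r \<in> {r, r'}" "sigma V r' \<in> {r, r'}" using bsV rV r'V dV bij_betw_apply by metis+
    have sinj: "sigma V r \<noteq> sigma V r'" using bsV rV r'V rr' by (metis bij_betw_def inj_onD)
    show "\<exists>i\<le>outv M. map_iso V (U i)"
    proof (cases "sigma V r = r")
      case True
      then have "sigma V r' = r'" using sr sinj by auto
      then have "map_iso V Emap" unfolding map_iso_def using gb ga True dV
        by (intro exI[of _ g]) (auto simp: Emap_def g_def r_def sw_def)
      then show ?thesis using k by (auto simp: U_def intro!: exI[of _ 1])
    next
      case False
      then have s1: "sigma V r = r'" using sr by auto
      then have "sigma V r' = r" using sr sinj by auto
      then have "map_iso V Lmap" unfolding map_iso_def using gb ga s1 dV rr'
        by (intro exI[of _ g]) (auto simp: Lmap_def g_def r_def sw_def)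
      then show ?thesis using k by (auto simp: U_def intro!: exI[of _ 0])
    qed
  qed
  show ?thesis using P1 P2 P3 by blast
qed

theorem proposition12:
  fixes M :: dmap and n k :: nat
  assumes "rooted_planar_map M" and "nedges M = n" and "outv M = k"
  shows "\<exists>U :: nat \<Rightarrow> dmap.
           (\<forall>i\<le>k. one_corner (U i) \<and> darts (U i) \<noteq> {} \<and> map_iso (Pi (U i)) M
                   \<and> nedges (U i) = n + 1 \<and> outvU (U i) = i) \<and>
           (\<forall>i\<le>k. \<forall>j\<le>k. map_iso (U i) (U j) \<longrightarrow> i = j) \<and>
           (\<forall>V. one_corner V \<and> darts V \<noteq> {} \<and> map_iso (Pi V) M \<longrightarrow>
                 (\<exists>i\<le>k. map_iso V (U i)))"
proof (cases "darts M = {}")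
  case True
  then show ?thesis using main_empty[OF True] assms(2,3) by simp
next
  case False
  interpret nm M using assms(1) False by (unfold_locales) auto
  show ?thesis using main_ne assms(2,3) by simp
qed


end
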